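(* Let $e_i=\nu(e_{i-1})+\varepsilon_i$, where $(\varepsilon_i)$ are i.i.d. with density $f_\varepsilon$, and $\nu$ is Lipschitz with $\ell_\nu:=\sup_{a\ne b}|\nu(a)-\nu(b)|/|a-b|<1$ (and $(e_i)$ is the stationary solution $e_i=G(\mathcal F_i)$). Let $\gamma>1$ and assume $\int_{\mathbb R}\psi^2(t)(1+|t|)^{-\gamma}dt<\infty$, $\varepsilon_i\in\mathcal L^q$ with $\gamma<q<\gamma+2$, and $\sum_{k=0}^{p+1}\int_{\mathbb R}|f_\varepsilon^{(k)}(v)|^2(1+|v|)^\gamma dv<\infty$. Then there exists $\chi\in(0,1)$ with $\bar\omega_l(i)=O(\chi^i)$ for $0\le l\le p$.
   Context: $\psi$ is the nondecreasing derivative of a convex $\rho$; fix $\epsilon_0>0$ and $\bar\psi(u;\epsilon_0)=|\psi(u+\epsilon_0)|+|\psi(u-\epsilon_0)|$. $\mathcal F_k=(\dots,\varepsilon_{k-1},\varepsilon_k)$; $(\varepsilon_k')$ an independent i.i.d. copy; $\mathcal F_k^*=(\dots,\varepsilon_{-1},\varepsilon_0',\varepsilon_1,\dots,\varepsilon_k)$ for $k\ge0$, $e_k^*=G(\mathcal F_k^* )$. The conditional density of $e_{i+1}$ given $\mathcal F_i$ is $f_1(u\mid\mathcal F_i)=f_\varepsilon(u-\nu(e_i))$, and $f_1(u\mid\mathcal F_i^* )=f_\varepsilon(u-\nu(e_i^* ))$; $f_1^{(l)}$ its $l$-th $u$-derivative. $\bar\omega_l(i)=\int_{\mathbb R}\|f_1^{(l)}(u\mid\mathcal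 F_i)-f_1^{(l)}(u\mid\mathcal F_i^* )\|\bar\psi(u;\epsilon_0)du$, $\|V\|=(EV^2)^{1/2}$. *)

theory Defs
  imports "HOL-Probability.Probability"
begin

definition L2norm :: "'a measure \<Rightarrow> ('a \<Rightarrow> real) \<Rightarrow> ennreal" where
  "L2norm M V = (let I = (\<integral>\<^sup>+ x. ennreal ((V x)\<^sup>2) \<partial>M)
                  in if I = \<infinity> then \<infinity> else ennreal (sqrt (enn2real I)))"

definition psibar :: "(real \<Rightarrow> real) \<Rightarrow> real \<Rightarrow> real \<Rightarrow> real" where
  "psibar \<psi> \<epsilon>0 u = \<bar>\<psi> (u + \<epsilon>0)\<bar> + \<bar>\<psi> (u - \<epsilon>0)\<bar>"

text \<open>Conditional density f_1(u | F_i) = f_eps(u - nu(e_i)), with e_i = y.\<close>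
definition cond_dens :: "(real \<Rightarrow> real) \<Rightarrow> (real \<Rightarrow> real) \<Rightarrow> real \<Rightarrow> real \<Rightarrow> real" where
  "cond_dens f\<^sub>\<epsilon> \<nu> y u = f\<^sub>\<epsilon> (u - \<nu> y)"

definition omega_bar ::
  "'a measure \<Rightarrow> (real \<Rightarrow> real) \<Rightarrow> (real \<Rightarrow> real) \<Rightarrow> (real \<Rightarrow> real) \<Rightarrow> real
   \<Rightarrow> (nat \<Rightarrow> 'a \<Rightarrow> real) \<Rightarrow> (nat \<Rightarrow> 'a \<Rightarrow> real) \<Rightarrow> nat \<Rightarrow> nat \<Rightarrow> ennreal" where
  "omega_bar M f\<^sub>\<epsilon> \<nu> \<psi> \<epsilon>0 e estar l i =
     (\<integral>\<^sup>+ u. L2norm M (\<lambda>x. (deriv ^^ l) (cond_dens f\<^sub>\<epsilon> \<nu> (e i x)) u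
                            - (deriv ^^ l) (cond_dens f\<^sub>\<epsilon> \<nu> (estar i x)) u)
            * ennreal (psibar \<psi> \<epsilon>0 u) \<partial>lborel)"

end

theory Submission
  imports Defs
begin

lemma abs_le_sq1: "\<bar>a::real\<bar> \<le> a^2 + 1"
proof (cases "\<bar>a\<bar> \<le> 1")
  case True then show ?thesis by (smt (verit) zero_le_power2)
next
  case False then have "\<bar>a\<bar> * 1 \<le> \<bar>a\<bar> * \<bar>a\<bar>" by (intro mult_left_mono) auto
  then show ?thesis by (simp add: power2_eq_square abs_mult_self_eq)
qed

lemma W_shift:
  fixes u t \<gamma> :: real assumes "0 \<le> \<gamma>"
  shows "(1 + \<bar>u + t\<bar>) powr \<gamma> \<le> (1 + \<bar>u\<bar>) powr \<gamma> * (1 + \<bar>t\<bar>) powr \<gamma>"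
proof -
  have "1 + \<bar>u + t\<bar> \<le> (1 + \<bar>u\<bar>) * (1 + \<bar>t\<bar>)"
    by (simp add: algebra_simps) (smt (verit) abs_ge_zero abs_triangle_ineq mult_nonneg_nonneg)
  then have "(1 + \<bar>u + t\<bar>) powr \<gamma> \<le> ((1 + \<bar>u\<bar>) * (1 + \<bar>t\<bar>)) powr \<gamma>"
    by (intro powr_mono2 assms) auto
  also have "\<dots> = (1 + \<bar>u\<bar>) powr \<gamma> * (1 + \<bar>t\<bar>) powr \<gamma>"
    by (simp add: powr_mult)
  finally show ?thesis .
qed

lemma deriv_borel:
  fixes h h' :: "real \<Rightarrow> real"
  assumes d: "\<And>x. (h has_real_derivative h' x) (at x)"
  shows "h' \<in> borel_measurable borel"
proof (rule borel_measurable_LIMSEQ_real)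
  have cont: "continuous_on UNIV h"
    using d by (meson DERIV_isCont continuous_at_imp_continuous_on)
  fix n :: nat
  show "(\<lambda>x. (h (x + 1 / (real n + 1)) - h x) / (1 / (real n + 1))) \<in> borel_measurable borel"
    by (intro borel_measurable_continuous_onI continuous_intros continuous_on_compose2[OF cont]) auto
next
  fix x :: real assume "x \<in> space borel"
  have lim: "((\<lambda>t. (h (x + t) - h x) / t) \<longlongrightarrow> h' x) (at 0)"
    using d[of x] by (simp add: DERIV_def)
  have s: "(\<lambda>n. 1 / (real n + 1)) \<longlonglongrightarrow> 0"
    using LIMSEQ_inverse_real_of_nat by (simp add: inverse_eq_divide add.commute)
  have s': "filterlim (\<lambda>n. 1 / (real n + 1)) (at 0) sequentially"
    using s by (intro filterlim_atI) (auto intro!: always_eventually simp: add_pos_nonneg)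
  show "(\<lambda>n. (h (x + 1 / (real n + 1)) - h x) / (1 / (real n + 1))) \<longlonglongrightarrow> h' x"
    using filterlim_compose[OF lim s'] by simp
qed

lemma nn_translate:
  fixes f :: "real \<Rightarrow> ennreal"
  assumes [measurable]: "f \<in> borel_measurable borel"
  shows "(\<integral>\<^sup>+ u. f (u + a) \<partial>lborel) = (\<integral>\<^sup>+ v. f v \<partial>lborel)"
  using nn_integral_real_affine[OF assms, of 1 a] by (simp add: add.commute)

lemma ftc_sq:
  fixes h h' :: "real \<Rightarrow> real"
  assumes d: "\<And>t. (h has_real_derivative h' t) (at t)" and xy: "x \<le> y"
  shows "ennreal ((h y - h x)^2) \<le> ennreal (y - x) * (\<integral>\<^sup>+ t. ennreal ((h' t)^2 * indicator {x..y} t) \<partial>lborel)"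
proof -
  have [measurable]: "h' \<in> borel_measurable borel" by (rule deriv_borel[OF d])
  let ?I = "\<integral>\<^sup>+ t. ennreal ((h' t)^2 * indicator {x..y} t) \<partial>lborel"
  show ?thesis
  proof (cases "?I = \<infinity>")
    case True
    then show ?thesis
      using xy by (cases "x = y") (auto simp: ennreal_mult_top)
  next
    case False
    have "(\<integral>\<^sup>+ t. ennreal (\<bar>h' t\<bar> * indicator {x..y} t) \<partial>lborel)
        \<le> (\<integral>\<^sup>+ t. ennreal ((h' t)^2 * indicator {x..y} t) + ennreal (indicator {x..y} t) \<partial>lborel)"
    proof (intro nn_integral_mono)
      fix t
      have "\<bar>h' t\<bar> \<le> (h' t)^2 + 1" by (rule abs_le_sq1)
      then show "ennreal (\<bar>h' t\<bar> * indicator {x..y} t) \<le> ennreal ((h' t)^2 * indicator {x..y} t) + ennreal (indicator {x..y} t)"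
        by (auto simp: indicator_def ennreal_plus[symmetric] simp del: ennreal_plus intro!: ennreal_leI)
    qed
    also have "\<dots> = ?I + (\<integral>\<^sup>+ t. ennreal (indicator {x..y} t) \<partial>lborel)"
      by (intro nn_integral_add) auto
    also have "(\<integral>\<^sup>+ t. ennreal (indicator {x..y} t) \<partial>lborel) = ennreal (y - x)"
      using xy by (simp add: ennreal_indicator)
    also have "?I + ennreal (y - x) < \<infinity>"
      using False by (simp add: less_top[symmetric])
    finally have fin: "(\<integral>\<^sup>+ t. ennreal (\<bar>h' t\<bar> * indicator {x..y} t) \<partial>lborel) < \<infinity>" .
    have si: "set_integrable lborel {x..y} h'"
      unfolding set_integrable_def
      using fin by (subst integrable_iff_bounded) (auto simp: abs_mult mult.commute)
    have "(h' has_integral (h y - h x)) {x..y}"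
      using xy d by (intro fundamental_theorem_of_calculus)
        (auto simp: has_real_derivative_iff_has_vector_derivative[symmetric] intro: has_field_derivative_at_within)
    then have eq: "(LINT t:{x..y}|lborel. h' t) = h y - h x"
      using set_borel_integral_eq_integral(2)[OF si] by (simp add: integral_unique)
    have sia: "set_integrable lborel {x..y} (\<lambda>t. \<bar>h' t\<bar>)" using set_integrable_abs[OF si] .
    have "\<bar>h y - h x\<bar> \<le> (LINT t:{x..y}|lborel. \<bar>h' t\<bar>)"
      using set_integral_norm_bound[OF si] eq by simp
    moreover have "ennreal (LINT t:{x..y}|lborel. \<bar>h' t\<bar>) = (\<integral>\<^sup>+ t. ennreal (\<bar>h' t\<bar> * indicator {x..y} t) \<partial>lborel)"
      using sia unfolding set_lebesgue_integral_def set_integrable_def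
      by (subst nn_integral_eq_integral) (auto simp: mult.commute)
    ultimately have le1: "ennreal \<bar>h y - h x\<bar> \<le> (\<integral>\<^sup>+ t. ennreal (\<bar>h' t\<bar> * indicator {x..y} t) \<partial>lborel)"
      by (metis ennreal_leI)
    have "(\<integral>\<^sup>+ t. ennreal (\<bar>h' t\<bar> * indicator {x..y} t) * indicator {x..y} t \<partial>lborel)\<^sup>2
        \<le> (\<integral>\<^sup>+ t. (ennreal (\<bar>h' t\<bar> * indicator {x..y} t))^2 \<partial>lborel) * (\<integral>\<^sup>+ t. (indicator {x..y} t)^2 \<partial>lborel)"
      by (intro Cauchy_Schwarz_nn_integral) auto
    also have "(\<integral>\<^sup>+ t. (ennreal (\<bar>h' t\<bar> * indicator {x..y} t))^2 \<partial>lborel) = ?I"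
      by (intro nn_integral_cong) (auto simp: indicator_def ennreal_power[symmetric] power2_abs simp del: ennreal_power, subst ennreal_power, auto)
    also have "(\<integral>\<^sup>+ t. (indicator {x..y} t)^2 \<partial>lborel) = (\<integral>\<^sup>+ t. indicator {x..y} t \<partial>lborel)"
      by (intro nn_integral_cong) (auto simp: indicator_def)
    also have "\<dots> = ennreal (y - x)"
      using xy by simp
    also have "(\<integral>\<^sup>+ t. ennreal (\<bar>h' t\<bar> * indicator {x..y} t) * indicator {x..y} t \<partial>lborel)
        = (\<integral>\<^sup>+ t. ennreal (\<bar>h' t\<bar> * indicator {x..y} t) \<partial>lborel)"
      by (intro nn_integral_cong) (auto simp: indicator_def)
    finally have le2: "(\<integral>\<^sup>+ t. ennreal (\<bar>h' t\<bar> * indicator {x..y} t) \<partial>lborel)\<^sup>2 \<le> ?I * ennreal (y - x)" .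
    have "ennreal ((h y - h x)^2) = (ennreal \<bar>h y - h x\<bar>)^2"
      by (simp add: ennreal_power power2_abs)
    also have "\<dots> \<le> (\<integral>\<^sup>+ t. ennreal (\<bar>h' t\<bar> * indicator {x..y} t) \<partial>lborel)\<^sup>2"
      using le1 by (intro power_mono) auto
    also have "\<dots> \<le> ennreal (y - x) * ?I" using le2 by (simp add: mult.commute)
    finally show ?thesis .
  qed
qed

lemma ennreal_2sum: "0 \<le> x \<Longrightarrow> 0 \<le> y \<Longrightarrow> ennreal (2*x + 2*y) = 2*ennreal x + 2*ennreal y"
  by (simp add: ennreal_plus ennreal_mult)

lemma bound1:
  fixes g :: "real \<Rightarrow> real"
  assumes [measurable]: "g \<in> borel_measurable borel" and ga: "0 \<le> \<gamma>"
  shows "(\<integral>\<^sup>+u. ennreal ((g (u - a))^2 * (1+\<bar>u\<bar>) powr \<gamma>) \<partial>lborel)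
     \<le> ennreal ((1+\<bar>a\<bar>) powr \<gamma>) * (\<integral>\<^sup>+v. ennreal ((g v)^2 * (1+\<bar>v\<bar>) powr \<gamma>) \<partial>lborel)"
proof -
  have "(\<integral>\<^sup>+u. ennreal ((g (u - a))^2 * (1+\<bar>u\<bar>) powr \<gamma>) \<partial>lborel)
      = (\<integral>\<^sup>+v. ennreal ((g v)^2 * (1+\<bar>v + a\<bar>) powr \<gamma>) \<partial>lborel)"
    using nn_translate[of "\<lambda>u. ennreal ((g (u - a))^2 * (1+\<bar>u\<bar>) powr \<gamma>)" a] by simp
  also have "\<dots> \<le> (\<integral>\<^sup>+v. ennreal ((1+\<bar>a\<bar>) powr \<gamma>) * ennreal ((g v)^2 * (1+\<bar>v\<bar>) powr \<gamma>) \<partial>lborel)"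
  proof (intro nn_integral_mono)
    fix v
    have "(g v)^2 * (1+\<bar>v + a\<bar>) powr \<gamma> \<le> (g v)^2 * ((1+\<bar>v\<bar>) powr \<gamma> * (1+\<bar>a\<bar>) powr \<gamma>)"
      by (intro mult_left_mono W_shift ga) auto
    then show "ennreal ((g v)^2 * (1+\<bar>v + a\<bar>) powr \<gamma>) \<le> ennreal ((1+\<bar>a\<bar>) powr \<gamma>) * ennreal ((g v)^2 * (1+\<bar>v\<bar>) powr \<gamma>)"
      by (simp add: ennreal_mult'[symmetric] ennreal_leI mult_ac)
  qed
  also have "\<dots> = ennreal ((1+\<bar>a\<bar>) powr \<gamma>) * (\<integral>\<^sup>+v. ennreal ((g v)^2 * (1+\<bar>v\<bar>) powr \<gamma>) \<partial>lborel)"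
    by (intro nn_integral_cmult) auto
  finally show ?thesis .
qed

lemma bound_diff1:
  fixes g :: "real \<Rightarrow> real"
  assumes [measurable]: "g \<in> borel_measurable borel" and ga: "0 \<le> \<gamma>"
  shows "(\<integral>\<^sup>+u. ennreal ((g (u - a) - g (u - b))^2 * (1+\<bar>u\<bar>) powr \<gamma>) \<partial>lborel)
     \<le> ennreal (2 * (1+\<bar>a\<bar>) powr \<gamma> + 2 * (1+\<bar>b\<bar>) powr \<gamma>) * (\<integral>\<^sup>+v. ennreal ((g v)^2 * (1+\<bar>v\<bar>) powr \<gamma>) \<partial>lborel)"
proof -
  let ?F = "\<integral>\<^sup>+v. ennreal ((g v)^2 * (1+\<bar>v\<bar>) powr \<gamma>) \<partial>lborel"
  have "(\<integral>\<^sup>+u. ennreal ((g (u - a) - g (u - b))^2 * (1+\<bar>u\<bar>) powr \<gamma>) \<partial>lborel)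
     \<le> (\<integral>\<^sup>+u. 2 * ennreal ((g (u - a))^2 * (1+\<bar>u\<bar>) powr \<gamma>) + 2 * ennreal ((g (u - b))^2 * (1+\<bar>u\<bar>) powr \<gamma>) \<partial>lborel)"
  proof (intro nn_integral_mono)
    fix u
    have "(g (u - a) - g (u - b))^2 \<le> 2 * (g (u - a))^2 + 2 * (g (u - b))^2"
      by (smt (verit) zero_le_power2 power2_diff power2_sum)
    then have "(g (u - a) - g (u - b))^2 * (1+\<bar>u\<bar>) powr \<gamma> \<le> (2 * (g (u - a))^2 + 2 * (g (u - b))^2) * (1+\<bar>u\<bar>) powr \<gamma>"
      by (intro mult_right_mono) auto
    then have "ennreal ((g (u - a) - g (u - b))^2 * (1+\<bar>u\<bar>) powr \<gamma>) \<le> ennreal (2 * ((g (u - a))^2 * (1+\<bar>u\<bar>) powr \<gamma>) + 2 * ((g (u - b))^2 * (1+\<bar>u\<bar>) powr \<gamma>))"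
      by (intro ennreal_leI) (simp add: algebra_simps)
    then show "ennreal ((g (u - a) - g (u - b))^2 * (1+\<bar>u\<bar>) powr \<gamma>) \<le> 2 * ennreal ((g (u - a))^2 * (1+\<bar>u\<bar>) powr \<gamma>) + 2 * ennreal ((g (u - b))^2 * (1+\<bar>u\<bar>) powr \<gamma>)"
      by (subst (asm) ennreal_2sum) auto
  qed
  also have "\<dots> = 2 * (\<integral>\<^sup>+u. ennreal ((g (u - a))^2 * (1+\<bar>u\<bar>) powr \<gamma>) \<partial>lborel) + 2 * (\<integral>\<^sup>+u. ennreal ((g (u - b))^2 * (1+\<bar>u\<bar>) powr \<gamma>) \<partial>lborel)"
    by (simp add: nn_integral_add nn_integral_cmult)
  also have "\<dots> \<le> 2 * (ennreal ((1+\<bar>a\<bar>) powr \<gamma>) * ?F) + 2 * (ennreal ((1+\<bar>b\<bar>) powr \<gamma>) * ?F)"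
    by (intro add_mono mult_left_mono bound1 ga) auto
  also have "\<dots> = ennreal (2 * (1+\<bar>a\<bar>) powr \<gamma> + 2 * (1+\<bar>b\<bar>) powr \<gamma>) * ?F"
    by (subst ennreal_2sum) (auto simp: algebra_simps)
  finally show ?thesis .
qed

lemma bound2:
  fixes g g' :: "real \<Rightarrow> real"
  assumes d: "\<And>t. (g has_real_derivative g' t) (at t)" and ga: "0 \<le> \<gamma>"
  shows "(\<integral>\<^sup>+u. ennreal ((g (u - a) - g (u - b))^2 * (1+\<bar>u\<bar>) powr \<gamma>) \<partial>lborel)
     \<le> ennreal ((a - b)^2 * (1 + \<bar>a\<bar> + \<bar>b\<bar>) powr \<gamma>) * (\<integral>\<^sup>+s. ennreal ((g' s)^2 * (1+\<bar>s\<bar>) powr \<gamma>) \<partial>lborel)"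
proof -
  have [measurable]: "g' \<in> borel_measurable borel" by (rule deriv_borel[OF d])
  define m where "m = min a b"
  define M where "M = max a b"
  have mM: "m \<le> M" by (simp add: m_def M_def)
  define Y where "Y = (1 + \<bar>a\<bar> + \<bar>b\<bar>) powr \<gamma>"
  have Y0: "0 \<le> Y" by (simp add: Y_def)
  let ?W = "\<lambda>u::real. (1+\<bar>u\<bar>) powr \<gamma>"
  let ?K = "\<lambda>u s. ennreal (?W u * (g' s)^2 * (if u - M \<le> s \<and> s \<le> u - m then 1 else 0))"
  have meas: "case_prod ?K \<in> borel_measurable (lborel \<Otimes>\<^sub>M lborel)"
    by measurable
  have "(\<integral>\<^sup>+u. ennreal ((g (u - a) - g (u - b))^2 * ?W u) \<partial>lborel)
      \<le> (\<integral>\<^sup>+u. ennreal (M - m) * (\<integral>\<^sup>+s. ?K u s \<partial>lborel) \<partial>lborel)"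
  proof (intro nn_integral_mono)
    fix u
    have sq: "(g (u - a) - g (u - b))^2 = (g (u - m) - g (u - M))^2"
      by (cases "a \<le> b") (auto simp: m_def M_def power2_commute)
    have "ennreal ((g (u - m) - g (u - M))^2) \<le> ennreal ((u - m) - (u - M)) * (\<integral>\<^sup>+ s. ennreal ((g' s)^2 * indicator {u - M..u - m} s) \<partial>lborel)"
      using mM by (intro ftc_sq d) auto
    then have "ennreal ((g (u - a) - g (u - b))^2) * ennreal (?W u) \<le> ennreal (M - m) * (\<integral>\<^sup>+ s. ennreal ((g' s)^2 * indicator {u - M..u - m} s) \<partial>lborel) * ennreal (?W u)"
      by (simp add: sq mult_right_mono)
    also have "\<dots> = ennreal (M - m) * (\<integral>\<^sup>+s. ?K u s \<partial>lborel)"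
      by (subst mult.assoc, subst mult.commute[of _ "ennreal (?W u)"], subst nn_integral_cmult[symmetric])
         (auto intro!: nn_integral_cong simp: ennreal_mult'[symmetric] indicator_def of_bool_def mult_ac)
    finally show "ennreal ((g (u - a) - g (u - b))^2 * ?W u) \<le> ennreal (M - m) * (\<integral>\<^sup>+s. ?K u s \<partial>lborel)"
      by (simp add: ennreal_mult')
  qed
  also have "\<dots> = ennreal (M - m) * (\<integral>\<^sup>+u. (\<integral>\<^sup>+s. ?K u s \<partial>lborel) \<partial>lborel)"
    using meas by (intro nn_integral_cmult) measurable
  also have "(\<integral>\<^sup>+u. (\<integral>\<^sup>+s. ?K u s \<partial>lborel) \<partial>lborel) = (\<integral>\<^sup>+s. (\<integral>\<^sup>+u. ?K u s \<partial>lborel) \<partial>lborel)"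
    using meas by (rule lborel_pair.Fubini'[symmetric])
  also have "\<dots> \<le> (\<integral>\<^sup>+s. ennreal (M - m) * ennreal (Y * ((g' s)^2 * ?W s)) \<partial>lborel)"
  proof (intro nn_integral_mono)
    fix s
    have "(\<integral>\<^sup>+u. ?K u s \<partial>lborel) \<le> (\<integral>\<^sup>+u. ennreal (Y * ((g' s)^2 * ?W s)) * indicator {s + m..s + M} u \<partial>lborel)"
    proof (intro nn_integral_mono)
      fix u
      show "?K u s \<le> ennreal (Y * ((g' s)^2 * ?W s)) * indicator {s + m..s + M} u"
      proof (cases "u - M \<le> s \<and> s \<le> u - m")
        case True
        have "\<bar>u - s\<bar> \<le> \<bar>a\<bar> + \<bar>b\<bar>" using True by (auto simp: m_def M_def)
        then have "(1 + \<bar>u - s\<bar>) powr \<gamma> \<le> Y"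
          unfolding Y_def by (intro powr_mono2 ga) auto
        moreover have "?W u \<le> ?W s * (1 + \<bar>u - s\<bar>) powr \<gamma>"
          using W_shift[OF ga, of s "u - s"] by simp
        ultimately have "?W u \<le> ?W s * Y"
          by (smt (verit) mult_left_mono powr_ge_zero)
        then have "?W u * (g' s)^2 \<le> Y * ((g' s)^2 * ?W s)"
          by (smt (verit) mult_right_mono zero_le_power2 mult.commute mult.left_commute)
        then show ?thesis using True by (auto intro!: ennreal_leI)
      qed auto
    qed
    also have "\<dots> = ennreal (Y * ((g' s)^2 * ?W s)) * ennreal (M - m)"
      using mM by (subst nn_integral_cmult_indicator) auto
    finally show "(\<integral>\<^sup>+u. ?K u s \<partial>lborel) \<le> ennreal (M - m) * ennreal (Y * ((g' s)^2 * ?W s))"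
      by (simp add: mult.commute)
  qed
  also have "\<dots> = ennreal (M - m) * ennreal Y * (\<integral>\<^sup>+s. ennreal ((g' s)^2 * ?W s) \<partial>lborel)"
    using Y0 by (subst nn_integral_cmult[symmetric]) (auto simp: ennreal_mult mult.assoc)
  finally have "(\<integral>\<^sup>+u. ennreal ((g (u - a) - g (u - b))^2 * ?W u) \<partial>lborel)
      \<le> ennreal (M - m) * (ennreal (M - m) * ennreal Y * (\<integral>\<^sup>+s. ennreal ((g' s)^2 * ?W s) \<partial>lborel))"
    by (simp add: mult_left_mono)
  also have "\<dots> = ennreal ((a - b)^2 * Y) * (\<integral>\<^sup>+s. ennreal ((g' s)^2 * ?W s) \<partial>lborel)"
  proof -
    have "(M - m) * (M - m) = (a - b)^2" by (cases "a \<le> b") (auto simp: m_def M_def power2_eq_square algebra_simps)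
    then show ?thesis using mM Y0 by (simp add: ennreal_mult[symmetric] mult.assoc[symmetric])
  qed
  finally show ?thesis by (simp add: Y_def)
qed

lemma law_seq:
  fixes X :: "'k \<Rightarrow> 'a \<Rightarrow> real" and \<sigma> :: "nat \<Rightarrow> 'k"
  assumes P: "prob_space M"
    and ind: "prob_space.indep_vars M (\<lambda>_. borel) X UNIV"
    and rv: "\<And>k. X k \<in> borel_measurable M"
    and same: "\<And>k. distr M borel (X k) = \<mu>"
    and inj: "inj \<sigma>"
  shows "distr M (PiM UNIV (\<lambda>_::nat. borel)) (\<lambda>x n. X (\<sigma> n) x) = PiM UNIV (\<lambda>_::nat. \<mu>)"
proof -
  interpret prob_space M by fact
  have D0: "distr M (PiM UNIV (\<lambda>_::'k. borel)) (\<lambda>x. \<lambda>k\<in>UNIV. X k x) = PiM UNIV (\<lambda>k. distr M borel (X k))"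
    using indep_vars_iff_distr_eq_PiM[where I=UNIV and M'="\<lambda>_. borel" and X=X] ind rv by simp
  have smu: "sets \<mu> = sets borel" using same[of undefined] by (metis sets_distr)
  have spmu: "space \<mu> = UNIV" using sets_eq_imp_space_eq[OF smu] by simp
  have D: "distr M (PiM UNIV (\<lambda>_::'k. \<mu>)) (\<lambda>x k. X k x) = PiM UNIV (\<lambda>_::'k. \<mu>)"
  proof -
    have "distr M (PiM UNIV (\<lambda>_::'k. \<mu>)) (\<lambda>x k. X k x) = distr M (PiM UNIV (\<lambda>_::'k. borel)) (\<lambda>x. \<lambda>k\<in>UNIV. X k x)"
      by (intro distr_cong sets_PiM_cong) (auto simp: smu restrict_def)
    then show ?thesis using D0 by (simp add: same)
  qed
  have pmu: "prob_space \<mu>"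
    using same[of undefined] rv by (metis prob_space_distr)
  have R: "distr (PiM UNIV (\<lambda>_::'k. \<mu>)) (PiM UNIV (\<lambda>_::nat. \<mu>)) (\<lambda>\<omega>. \<lambda>n\<in>UNIV. \<omega> (\<sigma> n)) = PiM UNIV (\<lambda>_::nat. \<mu>)"
    using distr_PiM_reindex[of UNIV "\<lambda>_. \<mu>" \<sigma> UNIV] pmu inj by simp
  have rU: "(\<lambda>\<omega>. \<lambda>n\<in>UNIV. \<omega> (\<sigma> n)) = (\<lambda>\<omega> n. \<omega> (\<sigma> n))" by (auto simp: restrict_def)
  have m1: "(\<lambda>x k. X k x) \<in> measurable M (PiM UNIV (\<lambda>_::'k. \<mu>))"
    using rv smu by (intro measurable_PiM_single') (auto simp: measurable_def space_PiM spmu)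
  have m2: "(\<lambda>\<omega>. \<lambda>n. \<omega> (\<sigma> n)) \<in> measurable (PiM UNIV (\<lambda>_::'k. \<mu>)) (PiM UNIV (\<lambda>_::nat. \<mu>))"
    by (intro measurable_PiM_single') (auto simp: space_PiM)
  have "distr M (PiM UNIV (\<lambda>_::nat. borel)) (\<lambda>x n. X (\<sigma> n) x)
      = distr M (PiM UNIV (\<lambda>_::nat. \<mu>)) ((\<lambda>\<omega>. \<lambda>n. \<omega> (\<sigma> n)) \<circ> (\<lambda>x k. X k x))"
    by (intro distr_cong sets_PiM_cong) (auto simp: smu)
  also have "\<dots> = distr (distr M (PiM UNIV (\<lambda>_::'k. \<mu>)) (\<lambda>x k. X k x)) (PiM UNIV (\<lambda>_::nat. \<mu>)) (\<lambda>\<omega>. \<lambda>n. \<omega> (\<sigma> n))"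
    by (rule distr_distr[symmetric, OF m2 m1])
  also have "\<dots> = PiM UNIV (\<lambda>_::nat. \<mu>)"
    using R by (simp add: D rU)
  finally show ?thesis .
qed

locale arsetup =
  fixes M :: "'a measure" and \<epsilon> \<epsilon>' :: "int \<Rightarrow> 'a \<Rightarrow> real" and f :: "real \<Rightarrow> real"
    and \<nu> :: "real \<Rightarrow> real" and G :: "(nat \<Rightarrow> real) \<Rightarrow> real" and e :: "int \<Rightarrow> 'a \<Rightarrow> real" and L :: real
  assumes prob: "prob_space M"
    and indep: "prob_space.indep_vars M (\<lambda>_. borel)
                  (\<lambda>k. case k of Inl i \<Rightarrow> \<epsilon> i | Inr i \<Rightarrow> \<epsilon>' i) UNIV"
    and dens: "\<And>i. distributed M lborel (\<epsilon> i) (\<lambda>v. ennreal (f v))"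
    and dens': "\<And>i. distributed M lborel (\<epsilon>' i) (\<lambda>v. ennreal (f v))"
    and lipL: "\<And>a b. \<bar>\<nu> a - \<nu> b\<bar> \<le> L * \<bar>a - b\<bar>"
    and nu_meas[measurable]: "\<nu> \<in> borel_measurable borel"
    and L_pos: "0 < L" and L_lt1: "L < 1"
    and G_meas[measurable]: "G \<in> borel_measurable (PiM UNIV (\<lambda>_::nat. borel))"
    and e_G: "\<And>i x. e i x = G (\<lambda>j. \<epsilon> (i - int j) x)"
    and e_rec: "\<And>i. AE x in M. e i x = \<nu> (e (i - 1) x) + \<epsilon> i x"
begin

interpretation P: prob_space M by (rule prob)

definition "X k = (case k of Inl i \<Rightarrow> \<epsilon> i | Inr i \<Rightarrow> \<epsilon>' i)"
definition "\<mu> = distr M borel (\<epsilon> 0)"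
definition "PP = PiM UNIV (\<lambda>_::nat. \<mu>)"
definition "Sq \<sigma> x = (\<lambda>n::nat. X (\<sigma> n) x)"
definition "\<sigma>e k j = Inl (k - int j)"
definition "\<sigma>s k j = (if j = k then Inr 0 else Inl (int k - int j))"
definition "es k x = G (Sq (\<sigma>s k) x)"

lemma eps_meas[measurable]: "\<epsilon> i \<in> borel_measurable M" "\<epsilon>' i \<in> borel_measurable M"
  using dens[of i] dens'[of i] unfolding distributed_def
  by (auto simp: measurable_def)

lemma X_meas[measurable]: "X k \<in> borel_measurable M"
  by (cases k) (auto simp: X_def)

lemma distr_eps: "distr M borel (\<epsilon> i) = density lborel f" "distr M borel (\<epsilon>' i) = density lborel f"
proof -
  have "distr M borel (\<epsilon> i) = distr M lborel (\<epsilon> i)" "distr M borel (\<epsilon>' i) = distr M lborel (\<epsilon>' i)"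
    by (auto intro!: distr_cong)
  then show "distr M borel (\<epsilon> i) = density lborel f" "distr M borel (\<epsilon>' i) = density lborel f"
    using dens[of i] dens'[of i] unfolding distributed_def by auto
qed

lemma X_same: "distr M borel (X k) = \<mu>"
  by (cases k) (auto simp: X_def \<mu>_def distr_eps)

lemma X_indep: "P.indep_vars (\<lambda>_. borel) X UNIV"
  using indep unfolding X_def[abs_def] .

lemma law: "inj \<sigma> \<Longrightarrow> distr M (PiM UNIV (\<lambda>_::nat. borel)) (Sq \<sigma>) = PP"
  unfolding Sq_def[abs_def] PP_def
  by (rule law_seq[OF prob X_indep X_meas X_same])

lemma Sq_meas[measurable]: "Sq \<sigma> \<in> measurable M (PiM UNIV (\<lambda>_::nat. borel))"
  unfolding Sq_def[abs_def] by (intro measurable_PiM_single') (auto simp: space_PiM)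

lemma sets_Pi: "sets PP = sets (PiM UNIV (\<lambda>_::nat. borel))"
  unfolding PP_def by (intro sets_PiM_cong) (auto simp: \<mu>_def)

lemma nn_transfer:
  assumes "inj \<sigma>" and [measurable]: "\<phi> \<in> borel_measurable (PiM UNIV (\<lambda>_::nat. borel))"
  shows "(\<integral>\<^sup>+x. \<phi> (Sq \<sigma> x) \<partial>M) = (\<integral>\<^sup>+y. \<phi> y \<partial>PP)"
proof -
  have "(\<integral>\<^sup>+y. \<phi> y \<partial>PP) = (\<integral>\<^sup>+y. \<phi> y \<partial>distr M (PiM UNIV (\<lambda>_::nat. borel)) (Sq \<sigma>))"
    using law[OF assms(1)] by simp
  also have "\<dots> = (\<integral>\<^sup>+x. \<phi> (Sq \<sigma> x) \<partial>M)"
    by (intro nn_integral_distr) auto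
  finally show ?thesis by simp
qed

lemma AE_transfer:
  assumes "inj \<sigma>" and [measurable]: "Measurable.pred (PiM UNIV (\<lambda>_::nat. borel)) P"
  shows "(AE x in M. P (Sq \<sigma> x)) \<longleftrightarrow> (AE y in PP. P y)"
proof -
  have "(AE y in PP. P y) \<longleftrightarrow> (AE y in distr M (PiM UNIV (\<lambda>_::nat. borel)) (Sq \<sigma>). P y)"
    by (subst law[OF assms(1)]) (rule refl)
  also have "\<dots> \<longleftrightarrow> (AE x in M. P (Sq \<sigma> x))"
    by (intro AE_distr_iff) auto
  finally show ?thesis by simp
qed

lemma inj_\<sigma>e: "inj (\<sigma>e k)" by (auto simp: inj_def \<sigma>e_def)
lemma inj_\<sigma>s: "inj (\<sigma>s k)" by (auto simp: inj_def \<sigma>s_def split: if_splits)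

lemma e_Sq: "e i x = G (Sq (\<sigma>e i) x)"
  by (simp add: e_G Sq_def \<sigma>e_def X_def)

lemma e_meas[measurable]: "e i \<in> borel_measurable M"
  unfolding e_Sq[abs_def] by measurable

lemma es_meas[measurable]: "es i \<in> borel_measurable M"
  unfolding es_def[abs_def] by measurable

lemma es_alt: "es k x = G (\<lambda>j. if j = k then \<epsilon>' 0 x else \<epsilon> (int k - int j) x)"
  unfolding es_def Sq_def \<sigma>s_def X_def by (rule arg_cong[where f=G]) auto

definition "RP y \<longleftrightarrow> G y = \<nu> (G (\<lambda>j. y (Suc j))) + y 0"

lemma RP_meas[measurable]: "Measurable.pred (PiM UNIV (\<lambda>_::nat. borel)) RP"
proof -
  have [measurable]: "(\<lambda>y::nat\<Rightarrow>real. \<lambda>j. y (Suc j)) \<in> measurable (PiM UNIV (\<lambda>_::nat. borel)) (PiM UNIV (\<lambda>_::nat. borel))"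
    by (intro measurable_PiM_single') (auto simp: space_PiM)
  have [measurable]: "(\<lambda>y. G (\<lambda>j. y (Suc j))) \<in> borel_measurable (PiM UNIV (\<lambda>_::nat. borel))"
    by (rule measurable_compose[OF _ G_meas]) measurable
  have [measurable]: "(\<lambda>y. \<nu> (G (\<lambda>j. y (Suc j)))) \<in> borel_measurable (PiM UNIV (\<lambda>_::nat. borel))"
    by (rule measurable_compose[OF _ nu_meas]) measurable
  have [measurable]: "(\<lambda>y::nat\<Rightarrow>real. y 0) \<in> borel_measurable (PiM UNIV (\<lambda>_::nat. borel))"
    by (rule measurable_component_singleton) simp
  have [measurable]: "(\<lambda>y. \<nu> (G (\<lambda>j. y (Suc j))) + y 0) \<in> borel_measurable (PiM UNIV (\<lambda>_::nat. borel))"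
    by measurable
  show ?thesis unfolding RP_def[abs_def] pred_def by (intro measurable_equality_set) measurable
qed

lemma RP_AE: "AE y in PP. RP y"
proof -
  have "AE x in M. RP (Sq (\<sigma>e 1) x)"
    using e_rec[of 1]
  proof eventually_elim
    case (elim x)
    have "Sq (\<sigma>e 1) x 0 = \<epsilon> 1 x" by (simp add: Sq_def \<sigma>e_def X_def)
    moreover have "(\<lambda>j. Sq (\<sigma>e 1) x (Suc j)) = Sq (\<sigma>e 0) x"
      by (auto simp: Sq_def \<sigma>e_def)
    ultimately show ?case using elim by (simp add: RP_def e_Sq)
  qed
  then show ?thesis using AE_transfer[OF inj_\<sigma>e RP_meas] by simp
qed

lemma es_rec: "AE x in M. \<forall>k. es (Suc k) x = \<nu> (es k x) + \<epsilon> (int (Suc k)) x"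
proof -
  have "AE x in M. RP (Sq (\<sigma>s (Suc k)) x)" for k
    using AE_transfer[OF inj_\<sigma>s RP_meas] RP_AE by simp
  then have "AE x in M. \<forall>k. RP (Sq (\<sigma>s (Suc k)) x)"
    by (simp add: AE_all_countable)
  then show ?thesis
  proof eventually_elim
    case (elim x)
    show ?case
    proof
      fix k
      have "Sq (\<sigma>s (Suc k)) x 0 = \<epsilon> (int (Suc k)) x" by (simp add: Sq_def \<sigma>s_def X_def)
      moreover have "(\<lambda>j. Sq (\<sigma>s (Suc k)) x (Suc j)) = Sq (\<sigma>s k) x"
        by (auto simp: Sq_def \<sigma>s_def)
      ultimately show "es (Suc k) x = \<nu> (es k x) + \<epsilon> (int (Suc k)) x"
        using elim[rule_format, of k] by (simp add: RP_def es_def)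
    qed
  qed
qed

lemma e_rec_nat: "AE x in M. \<forall>k::nat. e (int (Suc k)) x = \<nu> (e (int k) x) + \<epsilon> (int (Suc k)) x"
proof (subst AE_all_countable, intro allI)
  fix k :: nat
  show "AE x in M. e (int (Suc k)) x = \<nu> (e (int k) x) + \<epsilon> (int (Suc k)) x"
    using e_rec[of "int (Suc k)"] by simp
qed

lemma contraction: "AE x in M. \<forall>i. \<bar>e (int i) x - es i x\<bar> \<le> L ^ i * \<bar>e 0 x - es 0 x\<bar>"
  using es_rec e_rec_nat
proof eventually_elim
  case (elim x)
  show ?case
  proof
    fix i show "\<bar>e (int i) x - es i x\<bar> \<le> L ^ i * \<bar>e 0 x - es 0 x\<bar>"
    proof (induction i)
      case (Suc i)
      have "\<bar>e (int (Suc i)) x - es (Suc i) x\<bar> = \<bar>\<nu> (e (int i) x) - \<nu> (es i x)\<bar>"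
        using elim by simp
      also have "\<dots> \<le> L * \<bar>e (int i) x - es i x\<bar>" by (rule lipL)
      also have "\<dots> \<le> L * (L ^ i * \<bar>e 0 x - es 0 x\<bar>)"
        using Suc L_pos by (intro mult_left_mono) auto
      finally show ?case by simp
    qed simp
  qed
qed

end

lemma powr_le_self: "0 \<le> t \<Longrightarrow> t \<le> 1 \<Longrightarrow> 1 \<le> q \<Longrightarrow> t powr q \<le> (t::real)"
proof (cases "t = 0")
  case False
  assume "0 \<le> t" "t \<le> 1" "1 \<le> q"
  then have "t powr q \<le> t powr 1" using False by (intro powr_mono') auto
  then show ?thesis using False \<open>0 \<le> t\<close> by simp
qed simp

lemma convex_powr0: assumes "1 \<le> q" shows "convex_on {0..} (\<lambda>x::real. x powr q)"
proof (rule convex_onI)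
  show "convex {0::real..}" by simp
  fix t x y :: real assume t: "0 < t" "t < 1" and xy: "x \<in> {0..}" "y \<in> {0..}"
  show "((1 - t) *\<^sub>R x + t *\<^sub>R y) powr q \<le> (1 - t) * x powr q + t * y powr q"
  proof (cases "x = 0")
    case True
    have "(t * y) powr q = t powr q * y powr q" using t xy by (simp add: powr_mult)
    also have "\<dots> \<le> t * y powr q" using t assms by (intro mult_right_mono powr_le_self) auto
    finally show ?thesis using True by simp
  next
    case xnz: False
    show ?thesis
    proof (cases "y = 0")
      case True
      have "((1 - t) * x) powr q = (1 - t) powr q * x powr q" using t xy by (simp add: powr_mult)
      also have "\<dots> \<le> (1 - t) * x powr q" using t assms by (intro mult_right_mono powr_le_self) auto
      finally show ?thesis using True by simp
    next
      case False
      then show ?thesis using convex_onD[OF powr_convex[OF assms], of t x y] t xy xnz by auto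
    qed
  qed
qed

lemma powr_sum_le:
  fixes a x :: "'i \<Rightarrow> real"
  assumes "finite A" "\<And>k. k \<in> A \<Longrightarrow> 0 \<le> a k" "\<And>k. k \<in> A \<Longrightarrow> 0 \<le> x k" "1 \<le> q"
  shows "(\<Sum>k\<in>A. a k * x k) powr q \<le> (\<Sum>k\<in>A. a k) powr (q - 1) * (\<Sum>k\<in>A. a k * x k powr q)"
proof (cases "(\<Sum>k\<in>A. a k) = 0")
  case True
  then have "\<forall>k\<in>A. a k = 0" using assms sum_nonneg_eq_0_iff by blast
  then show ?thesis by simp
next
  case False
  define s where "s = (\<Sum>k\<in>A. a k)"
  have s0: "0 < s" using False assms unfolding s_def by (metis order_le_less sum_nonneg)
  have ne: "A \<noteq> {}" using False by auto
  have "(\<Sum>k\<in>A. (a k / s) *\<^sub>R x k) powr q \<le> (\<Sum>k\<in>A. (a k / s) * x k powr q)"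
    using assms s0 ne
    by (intro convex_on_sum[OF assms(1) ne convex_powr0[OF assms(4)]])
       (auto simp: s_def[symmetric] sum_divide_distrib[symmetric])
  then have "(\<Sum>k\<in>A. a k * x k / s) powr q \<le> (\<Sum>k\<in>A. a k * x k powr q) / s"
    by (simp add: sum_divide_distrib[symmetric] mult.commute)
  then have h: "((\<Sum>k\<in>A. a k * x k) / s) powr q \<le> (\<Sum>k\<in>A. a k * x k powr q) / s"
    by (simp add: sum_divide_distrib[symmetric])
  have "(\<Sum>k\<in>A. a k * x k) powr q = s powr q * ((\<Sum>k\<in>A. a k * x k) / s) powr q"
    using s0 assms by (subst powr_mult[symmetric]) (auto intro!: sum_nonneg)
  also have "\<dots> \<le> s powr q * ((\<Sum>k\<in>A. a k * x k powr q) / s)"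
    using h by (intro mult_left_mono) auto
  also have "\<dots> = s powr (q - 1) * (\<Sum>k\<in>A. a k * x k powr q)"
    using s0 by (simp add: powr_diff)
  finally show ?thesis by (simp add: s_def)
qed

lemma add_powr_le:
  fixes a b q :: real
  assumes "0 \<le> a" "0 \<le> b" "1 \<le> q"
  shows "(a + b) powr q \<le> 2 powr (q - 1) * (a powr q + b powr q)"
  using powr_sum_le[of "{0::nat,1}" "\<lambda>_. 1" "\<lambda>k. if k = 0 then a else b" q] assms by simp

locale armom = arsetup +
  fixes q :: real
  assumes q1: "1 \<le> q"
    and eps_Lq: "\<And>i. (\<integral>\<^sup>+ x. ennreal (\<bar>\<epsilon> i x\<bar> powr q) \<partial>M) < \<infinity>"
begin

interpretation P: prob_space M by (rule prob)

lemma pmu: "prob_space \<mu>"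
  unfolding \<mu>_def by (rule P.prob_space_distr) simp

lemma pPP: "prob_space PP"
  unfolding PP_def using pmu by (intro prob_space_PiM) auto

definition "c = \<bar>\<nu> 0\<bar>"
definition "Aq = enn2real (\<integral>\<^sup>+ x. ennreal (\<bar>\<epsilon> 0 x\<bar> powr q) \<partial>M)"

lemma eps_mom: "(\<integral>\<^sup>+ x. ennreal (\<bar>\<epsilon> i x\<bar> powr q) \<partial>M) = ennreal Aq"
proof -
  have "(\<integral>\<^sup>+ x. ennreal (\<bar>\<epsilon> i x\<bar> powr q) \<partial>M) = (\<integral>\<^sup>+ v. ennreal (\<bar>v\<bar> powr q) \<partial>distr M borel (\<epsilon> i))" for i
    by (subst nn_integral_distr) auto
  then have "(\<integral>\<^sup>+ x. ennreal (\<bar>\<epsilon> i x\<bar> powr q) \<partial>M) = (\<integral>\<^sup>+ x. ennreal (\<bar>\<epsilon> 0 x\<bar> powr q) \<partial>M)"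
    by (simp add: distr_eps)
  then show ?thesis unfolding Aq_def using eps_Lq[of 0] by (simp add: less_top ennreal_enn2real)
qed

lemma Aq_nonneg: "0 \<le> Aq" by (simp add: Aq_def)

lemma nu_bound: "\<bar>\<nu> y\<bar> \<le> c + L * \<bar>y\<bar>"
  using lipL[of y 0] unfolding c_def by simp

definition "S n x = (\<Sum>k<n. L^k * (c + \<bar>\<epsilon> (- int k) x\<bar>))"

lemma S_nonneg: "0 \<le> S n x"
  unfolding S_def c_def using L_pos by (intro sum_nonneg) auto

lemma S_meas[measurable]: "S n \<in> borel_measurable M"
  unfolding S_def[abs_def] by measurable

lemma back_bound: "AE x in M. \<forall>n. \<bar>e 0 x\<bar> \<le> S n x + L^n * \<bar>e (- int n) x\<bar>"
proof -
  have "AE x in M. \<forall>k::nat. e (- int k) x = \<nu> (e (- int (Suc k)) x) + \<epsilon> (- int k) x"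
  proof (subst AE_all_countable, intro allI)
    fix k :: nat
    show "AE x in M. e (- int k) x = \<nu> (e (- int (Suc k)) x) + \<epsilon> (- int k) x"
    proof -
      have eq: "- int (Suc k) = - int k - 1" by simp
      show ?thesis using e_rec[of "- int k"] unfolding eq by simp
    qed
  qed
  then show ?thesis
  proof eventually_elim
    case (elim x)
    show ?case
    proof
      fix n show "\<bar>e 0 x\<bar> \<le> S n x + L^n * \<bar>e (- int n) x\<bar>"
      proof (induction n)
        case 0 then show ?case by (simp add: S_def)
      next
        case (Suc n)
        have "\<bar>e (- int n) x\<bar> \<le> \<bar>\<nu> (e (- int (Suc n)) x)\<bar> + \<bar>\<epsilon> (- int n) x\<bar>"
          using elim[rule_format, of n] by simp
        also have "\<dots> \<le> c + L * \<bar>e (- int (Suc n)) x\<bar> + \<bar>\<epsilon> (- int n) x\<bar>"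
          using nu_bound by simp
        finally have "L^n * \<bar>e (- int n) x\<bar> \<le> L^n * (c + L * \<bar>e (- int (Suc n)) x\<bar> + \<bar>\<epsilon> (- int n) x\<bar>)"
          using L_pos by (intro mult_left_mono) auto
        then show ?case using Suc by (simp add: S_def algebra_simps)
      qed
    qed
  qed
qed

definition "B = (1 / (1 - L)) powr q * 2 powr (q - 1) * (c powr q + Aq)"

lemma S_mom: "(\<integral>\<^sup>+ x. ennreal (S n x powr q) \<partial>M) \<le> ennreal B"
proof -
  define C2 where "C2 = (1 / (1 - L)) powr (q - 1) * 2 powr (q - 1)"
  have C20: "0 \<le> C2" by (simp add: C2_def)
  have gs: "(\<Sum>k<n. L^k) \<le> 1 / (1 - L)"
    using L_pos L_lt1 by (simp add: sum_gp_strict divide_right_mono)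
  have pt: "S n x powr q \<le> (\<Sum>k<n. C2 * L^k * (c powr q + \<bar>\<epsilon> (- int k) x\<bar> powr q))" for x
  proof -
    have "S n x powr q \<le> (\<Sum>k<n. L^k) powr (q - 1) * (\<Sum>k<n. L^k * (c + \<bar>\<epsilon> (- int k) x\<bar>) powr q)"
      unfolding S_def using L_pos q1 by (intro powr_sum_le) (auto simp: c_def)
    also have "\<dots> \<le> (1 / (1 - L)) powr (q - 1) * (\<Sum>k<n. L^k * (2 powr (q - 1) * (c powr q + \<bar>\<epsilon> (- int k) x\<bar> powr q)))"
      using L_pos q1 gs
      by (intro mult_mono powr_mono2 sum_mono mult_left_mono add_powr_le sum_nonneg) (auto simp: c_def)
    also have "\<dots> = (\<Sum>k<n. C2 * L^k * (c powr q + \<bar>\<epsilon> (- int k) x\<bar> powr q))"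
      by (simp add: C2_def sum_distrib_left mult_ac)
    finally show ?thesis .
  qed
  have "(\<integral>\<^sup>+ x. ennreal (S n x powr q) \<partial>M) \<le> (\<integral>\<^sup>+ x. (\<Sum>k<n. ennreal (C2 * L^k) * (ennreal (c powr q) + ennreal (\<bar>\<epsilon> (- int k) x\<bar> powr q))) \<partial>M)"
  proof (intro nn_integral_mono)
    fix x
    have "ennreal (S n x powr q) \<le> ennreal (\<Sum>k<n. C2 * L^k * (c powr q + \<bar>\<epsilon> (- int k) x\<bar> powr q))"
      by (intro ennreal_leI pt)
    also have "\<dots> = (\<Sum>k<n. ennreal (C2 * L^k) * (ennreal (c powr q) + ennreal (\<bar>\<epsilon> (- int k) x\<bar> powr q)))"
      using C20 L_pos by (subst sum_ennreal[symmetric]) (auto intro!: sum.cong simp: ennreal_mult ennreal_plus)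
    finally show "ennreal (S n x powr q) \<le> (\<Sum>k<n. ennreal (C2 * L^k) * (ennreal (c powr q) + ennreal (\<bar>\<epsilon> (- int k) x\<bar> powr q)))" .
  qed
  also have "\<dots> = (\<Sum>k<n. ennreal (C2 * L^k) * (ennreal (c powr q) + ennreal Aq))"
    by (subst nn_integral_sum) (auto simp: nn_integral_cmult nn_integral_add eps_mom P.emeasure_space_1)
  also have "\<dots> = (\<Sum>k<n. ennreal (C2 * L^k * (c powr q + Aq)))"
    using C20 L_pos Aq_nonneg by (intro sum.cong refl) (simp add: ennreal_mult ennreal_plus)
  also have "\<dots> = ennreal (\<Sum>k<n. C2 * L^k * (c powr q + Aq))"
    using C20 L_pos Aq_nonneg by (intro sum_ennreal) auto
  also have "(\<Sum>k<n. C2 * L^k * (c powr q + Aq)) = (\<Sum>k<n. L^k) * (C2 * (c powr q + Aq))"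
    by (simp add: sum_distrib_right sum_distrib_left mult_ac)
  also have "\<dots> \<le> ennreal ((1 / (1 - L)) * (C2 * (c powr q + Aq)))"
    using gs C20 Aq_nonneg by (intro ennreal_leI mult_right_mono) auto
  also have "(1 / (1 - L)) * (C2 * (c powr q + Aq)) = B"
  proof -
    have "(1 / (1 - L)) * (1 / (1 - L)) powr (q - 1) = (1 / (1 - L)) powr q"
      using L_lt1 by (simp add: powr_diff field_simps)
    moreover have "(1 / (1 - L)) * (C2 * (c powr q + Aq)) = ((1 / (1 - L)) * (1 / (1 - L)) powr (q - 1)) * 2 powr (q - 1) * (c powr q + Aq)"
      unfolding C2_def by (simp only: mult_ac)
    ultimately show ?thesis unfolding B_def by simp
  qed
  finally show ?thesis .
qed

end

context armom begin

interpretation P: prob_space M by (rule prob)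
interpretation PP: prob_space PP by (rule pPP)

lemma G_meas_PP[measurable]: "G \<in> borel_measurable PP"
  using G_meas by (simp add: measurable_cong_sets[OF sets_Pi refl])

lemma trunc_lim:
  assumes K: "0 < K"
  shows "(\<lambda>n. \<integral>\<^sup>+x. ennreal (min (L^n * \<bar>e (- int n) x\<bar>) K powr q) \<partial>M) \<longlonglongrightarrow> 0"
proof -
  have eq: "(\<integral>\<^sup>+x. ennreal (min (L^n * \<bar>e (- int n) x\<bar>) K powr q) \<partial>M)
      = (\<integral>\<^sup>+y. ennreal (min (L^n * \<bar>G y\<bar>) K powr q) \<partial>PP)" for n
    using nn_transfer[OF inj_\<sigma>e, of "\<lambda>y. ennreal (min (L^n * \<bar>G y\<bar>) K powr q)" "- int n"]
    by (simp add: e_Sq)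
  have "(\<lambda>n. \<integral>\<^sup>+y. ennreal (min (L^n * \<bar>G y\<bar>) K powr q) \<partial>PP) \<longlonglongrightarrow> (\<integral>\<^sup>+y. 0 \<partial>PP)"
  proof (rule nn_integral_dominated_convergence[where w="\<lambda>_. ennreal (K powr q)"])
    show "(\<lambda>y. ennreal (min (L ^ n * \<bar>G y\<bar>) K powr q)) \<in> borel_measurable PP" for n
      by measurable
    show "AE y in PP. ennreal (min (L ^ n * \<bar>G y\<bar>) K powr q) \<le> ennreal (K powr q)" for n
      using K q1 L_pos by (intro AE_I2 ennreal_leI powr_mono2) (auto intro!: mult_nonneg_nonneg)
    show "(\<integral>\<^sup>+y. ennreal (K powr q) \<partial>PP) < \<infinity>"
      by (simp add: PP.emeasure_space_1)
    show "AE y in PP. (\<lambda>n. ennreal (min (L ^ n * \<bar>G y\<bar>) K powr q)) \<longlonglongrightarrow> 0"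
    proof (intro AE_I2)
      fix y
      have "(\<lambda>n. L ^ n * \<bar>G y\<bar>) \<longlonglongrightarrow> 0 * \<bar>G y\<bar>"
        using L_pos L_lt1 by (intro tendsto_mult LIMSEQ_power_zero tendsto_const) auto
      then have "(\<lambda>n. min (L ^ n * \<bar>G y\<bar>) K) \<longlonglongrightarrow> min 0 K"
        by (intro tendsto_min tendsto_const) auto
      then have "(\<lambda>n. min (L ^ n * \<bar>G y\<bar>) K powr q) \<longlonglongrightarrow> 0"
        using K q1 L_pos by (intro tendsto_zero_powrI[where g="\<lambda>_. q" and b=q]) (auto intro!: always_eventually mult_nonneg_nonneg)
      then show "(\<lambda>n. ennreal (min (L ^ n * \<bar>G y\<bar>) K powr q)) \<longlonglongrightarrow> 0"
        using tendsto_ennrealI by fastforce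
    qed
  qed auto
  then show ?thesis by (simp add: eq)
qed

lemma trunc_bound:
  assumes K: "0 < K"
  shows "(\<integral>\<^sup>+x. ennreal (min \<bar>e 0 x\<bar> K powr q) \<partial>M) \<le> ennreal (2 powr (q - 1)) * ennreal B"
proof -
  define t where "t n = (\<integral>\<^sup>+x. ennreal (min (L^n * \<bar>e (- int n) x\<bar>) K powr q) \<partial>M)" for n
  have le: "(\<integral>\<^sup>+x. ennreal (min \<bar>e 0 x\<bar> K powr q) \<partial>M) \<le> ennreal (2 powr (q - 1)) * (ennreal B + t n)" for n
  proof -
    have "(\<integral>\<^sup>+x. ennreal (min \<bar>e 0 x\<bar> K powr q) \<partial>M)
        \<le> (\<integral>\<^sup>+x. ennreal (2 powr (q - 1)) * (ennreal (S n x powr q) + ennreal (min (L^n * \<bar>e (- int n) x\<bar>) K powr q)) \<partial>M)"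
    proof (intro nn_integral_mono_AE)
      show "AE x in M. ennreal (min \<bar>e 0 x\<bar> K powr q) \<le> ennreal (2 powr (q - 1)) * (ennreal (S n x powr q) + ennreal (min (L^n * \<bar>e (- int n) x\<bar>) K powr q))"
        using back_bound
      proof eventually_elim
        case (elim x)
        have b: "\<bar>e 0 x\<bar> \<le> S n x + L^n * \<bar>e (- int n) x\<bar>" using elim by blast
        have Sn: "0 \<le> S n x" by (rule S_nonneg)
        have "min \<bar>e 0 x\<bar> K \<le> S n x + min (L^n * \<bar>e (- int n) x\<bar>) K"
          using b Sn by (auto simp: min_def)
        then have "min \<bar>e 0 x\<bar> K powr q \<le> (S n x + min (L^n * \<bar>e (- int n) x\<bar>) K) powr q"
          using K q1 by (intro powr_mono2) auto
        also have "\<dots> \<le> 2 powr (q - 1) * (S n x powr q + min (L^n * \<bar>e (- int n) x\<bar>) K powr q)"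
          using Sn K q1 L_pos by (intro add_powr_le) auto
        finally have "ennreal (min \<bar>e 0 x\<bar> K powr q) \<le> ennreal (2 powr (q - 1) * (S n x powr q + min (L^n * \<bar>e (- int n) x\<bar>) K powr q))"
          by (rule ennreal_leI)
        then show ?case by (simp add: ennreal_mult ennreal_plus)
      qed
    qed
    also have "\<dots> = ennreal (2 powr (q - 1)) * ((\<integral>\<^sup>+x. ennreal (S n x powr q) \<partial>M) + t n)"
      unfolding t_def by (simp add: nn_integral_cmult nn_integral_add)
    also have "\<dots> \<le> ennreal (2 powr (q - 1)) * (ennreal B + t n)"
      by (intro mult_left_mono add_mono S_mom) auto
    finally show ?thesis .
  qed
  have "(\<lambda>n. ennreal (2 powr (q - 1)) * (ennreal B + t n)) \<longlonglongrightarrow> ennreal (2 powr (q - 1)) * (ennreal B + 0)"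
    using trunc_lim[OF K] unfolding t_def
    by (intro ennreal_tendsto_cmult tendsto_add tendsto_const) auto
  then show ?thesis
    using le by (intro LIMSEQ_le_const[where X="\<lambda>n. ennreal (2 powr (q - 1)) * (ennreal B + t n)"]) auto
qed

lemma mom_e0: "(\<integral>\<^sup>+x. ennreal (\<bar>e 0 x\<bar> powr q) \<partial>M) \<le> ennreal (2 powr (q - 1)) * ennreal B"
proof -
  let ?f = "\<lambda>m x. ennreal (min \<bar>e 0 x\<bar> (real (Suc m)) powr q)"
  have "(\<lambda>m. integral\<^sup>N M (?f m)) \<longlonglongrightarrow> (\<integral>\<^sup>+x. ennreal (\<bar>e 0 x\<bar> powr q) \<partial>M)"
  proof (rule nn_integral_LIMSEQ)
    show "incseq ?f"
      using q1 by (auto simp: incseq_def le_fun_def intro!: ennreal_leI powr_mono2)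
    show "?f m \<in> borel_measurable M" for m by measurable
    fix x
    show "(\<lambda>m. ?f m x) \<longlonglongrightarrow> ennreal (\<bar>e 0 x\<bar> powr q)"
    proof (rule tendsto_eventually)
      obtain N :: nat where "\<bar>e 0 x\<bar> \<le> real N" using real_arch_simple by blast
      then show "\<forall>\<^sub>F m in sequentially. ?f m x = ennreal (\<bar>e 0 x\<bar> powr q)"
        by (auto simp: eventually_sequentially min_def intro!: exI[of _ N])
    qed
  qed
  then show ?thesis
    using trunc_bound by (intro LIMSEQ_le_const2) auto
qed

definition "Mq = (\<integral>\<^sup>+y. ennreal (\<bar>G y\<bar> powr q) \<partial>PP)"

lemma Mq_e: "(\<integral>\<^sup>+x. ennreal (\<bar>e i x\<bar> powr q) \<partial>M) = Mq"
  unfolding Mq_def using nn_transfer[OF inj_\<sigma>e, of "\<lambda>y. ennreal (\<bar>G y\<bar> powr q)" i]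
  by (simp add: e_Sq)

lemma Mq_es: "(\<integral>\<^sup>+x. ennreal (\<bar>es i x\<bar> powr q) \<partial>M) = Mq"
  unfolding Mq_def using nn_transfer[OF inj_\<sigma>s, of "\<lambda>y. ennreal (\<bar>G y\<bar> powr q)" i]
  by (simp add: es_def)

lemma Mq_fin: "Mq < \<infinity>"
proof -
  have B0: "0 \<le> B" unfolding B_def using Aq_nonneg by (simp add: c_def)
  have "Mq \<le> ennreal (2 powr (q - 1)) * ennreal B" using mom_e0 Mq_e[of 0] by simp
  also have "\<dots> = ennreal (2 powr (q - 1) * B)" using B0 by (simp add: ennreal_mult)
  also have "\<dots> < \<infinity>" by simp
  finally show ?thesis .
qed

end

lemma sum5_powr:
  fixes t0 t1 t2 t3 t4 q :: real
  assumes "0 \<le> t0" "0 \<le> t1" "0 \<le> t2" "0 \<le> t3" "0 \<le> t4" "1 \<le> q"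
  shows "(t0 + t1 + t2 + t3 + t4) powr q \<le> 5 powr (q - 1) * (t0 powr q + t1 powr q + t2 powr q + t3 powr q + t4 powr q)"
proof -
  have "(\<Sum>k<5. 1 * [t0,t1,t2,t3,t4] ! k) powr q \<le> (\<Sum>k<(5::nat). (1::real)) powr (q - 1) * (\<Sum>k<5. 1 * ([t0,t1,t2,t3,t4] ! k) powr q)"
    using assms by (intro powr_sum_le) (auto simp: less_Suc_eq numeral_eq_Suc nth_Cons split: nat.splits)
  then show ?thesis by (simp add: numeral_eq_Suc add_ac)
qed

lemma min_sq_powr:
  fixes d s :: real assumes "0 \<le> d" "0 < s" "s \<le> 2"
  shows "min 1 (d^2) \<le> d powr s"
proof (cases "d \<le> 1")
  case True
  have "d^2 = d powr 2" using assms by (cases "d = 0") (auto simp: powr_numeral)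
  also have "\<dots> \<le> d powr s" using True assms by (intro powr_mono') auto
  finally show ?thesis by simp
next
  case False
  then have "1 \<le> d powr s" using assms by (metis ge_one_powr_ge_zero less_eq_real_def not_le)
  then show ?thesis by simp
qed

context armom begin

interpretation P: prob_space M by (rule prob)

lemma nu_bound1: "\<bar>\<nu> y\<bar> \<le> c + \<bar>y\<bar>"
proof -
  have "L * \<bar>y\<bar> \<le> \<bar>y\<bar>" using L_pos L_lt1 by (intro mult_left_le_one_le) auto
  then show ?thesis using nu_bound[of y] by linarith
qed

lemma ae_core:
  fixes \<gamma> s :: real
  assumes ga: "0 \<le> \<gamma>" and qs: "q = s + \<gamma>" and s0: "0 < s" and s2: "s \<le> 2"
  shows "AE x in M. min 1 ((\<nu> (e (int i) x) - \<nu> (es i x))^2) * (1 + \<bar>\<nu> (e (int i) x)\<bar> + \<bar>\<nu> (es i x)\<bar>) powr \<gamma>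
     \<le> (L powr s)^i * (5 powr (q - 1) * ((1 + 2*c) powr q + \<bar>e 0 x\<bar> powr q + \<bar>es 0 x\<bar> powr q + \<bar>e (int i) x\<bar> powr q + \<bar>es i x\<bar> powr q))"
  using contraction
proof eventually_elim
  case (elim x)
  define a where "a = \<nu> (e (int i) x)"
  define b where "b = \<nu> (es i x)"
  define d where "d = \<bar>a - b\<bar>"
  define Y where "Y = 1 + \<bar>a\<bar> + \<bar>b\<bar>"
  define D where "D = \<bar>e 0 x - es 0 x\<bar>"
  have Y1: "1 \<le> Y" by (simp add: Y_def)
  have D0: "0 \<le> D" by (simp add: D_def)
  have "d \<le> L * \<bar>e (int i) x - es i x\<bar>" unfolding d_def a_def b_def by (rule lipL)
  also have "\<dots> \<le> L * (L^i * D)" using elim L_pos unfolding D_def by (intro mult_left_mono) auto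
  also have "\<dots> \<le> L^i * D" using L_pos L_lt1 D0 by (intro mult_left_le_one_le) auto
  finally have dD: "d \<le> L^i * D" .
  have "min 1 ((a - b)^2) = min 1 (d^2)" by (simp add: d_def)
  also have "\<dots> \<le> d powr s" using s0 s2 by (intro min_sq_powr) (auto simp: d_def)
  also have "\<dots> \<le> (L^i * D) powr s" using dD s0 by (intro powr_mono2) (auto simp: d_def)
  also have "\<dots> = (L^i) powr s * D powr s"
    by (rule powr_mult)
  also have "(L^i) powr s = (L powr s)^i"
  proof -
    have "L^i = L powr (real i)" using L_pos by (simp add: powr_realpow)
    then have "(L^i) powr s = L powr (real i * s)" by (simp add: powr_powr)
    also have "\<dots> = (L powr s)^i" using L_pos by (subst powr_power) auto
    finally show ?thesis .
  qed
  finally have m1: "min 1 ((a - b)^2) \<le> (L powr s)^i * D powr s" .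
  have "min 1 ((a - b)^2) * Y powr \<gamma> \<le> (L powr s)^i * D powr s * Y powr \<gamma>"
    using m1 by (intro mult_right_mono) auto
  also have "\<dots> = (L powr s)^i * (D powr s * Y powr \<gamma>)" by (simp add: mult.assoc)
  also have "\<dots> \<le> (L powr s)^i * ((D + Y) powr s * (D + Y) powr \<gamma>)"
  proof (intro mult_left_mono)
    have "D powr s \<le> (D + Y) powr s" using D0 Y1 s0 by (intro powr_mono2) auto
    moreover have "Y powr \<gamma> \<le> (D + Y) powr \<gamma>" using D0 Y1 ga by (intro powr_mono2) auto
    ultimately show "D powr s * Y powr \<gamma> \<le> (D + Y) powr s * (D + Y) powr \<gamma>"
      by (intro mult_mono) auto
  qed simp
  also have "\<dots> = (L powr s)^i * (D + Y) powr q"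
    by (simp add: qs powr_add)
  also have "\<dots> \<le> (L powr s)^i * (5 powr (q - 1) * ((1 + 2*c) powr q + \<bar>e 0 x\<bar> powr q + \<bar>es 0 x\<bar> powr q + \<bar>e (int i) x\<bar> powr q + \<bar>es i x\<bar> powr q))"
  proof (intro mult_left_mono)
    have "(D + Y) powr q \<le> ((1 + 2*c) + \<bar>e 0 x\<bar> + \<bar>es 0 x\<bar> + \<bar>e (int i) x\<bar> + \<bar>es i x\<bar>) powr q"
    proof (intro powr_mono2)
      have "\<bar>a\<bar> \<le> c + \<bar>e (int i) x\<bar>" unfolding a_def by (rule nu_bound1)
      moreover have "\<bar>b\<bar> \<le> c + \<bar>es i x\<bar>" unfolding b_def by (rule nu_bound1)
      moreover have "D \<le> \<bar>e 0 x\<bar> + \<bar>es 0 x\<bar>" unfolding D_def by simp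
      ultimately show "D + Y \<le> (1 + 2*c) + \<bar>e 0 x\<bar> + \<bar>es 0 x\<bar> + \<bar>e (int i) x\<bar> + \<bar>es i x\<bar>"
        unfolding Y_def by simp
    qed (use q1 D0 Y1 in auto)
    also have "\<dots> \<le> 5 powr (q - 1) * ((1 + 2*c) powr q + \<bar>e 0 x\<bar> powr q + \<bar>es 0 x\<bar> powr q + \<bar>e (int i) x\<bar> powr q + \<bar>es i x\<bar> powr q)"
      using q1 by (intro sum5_powr) (auto simp: c_def)
    finally show "(D + Y) powr q \<le> 5 powr (q - 1) * ((1 + 2*c) powr q + \<bar>e 0 x\<bar> powr q + \<bar>es 0 x\<bar> powr q + \<bar>e (int i) x\<bar> powr q + \<bar>es i x\<bar> powr q)" .
  qed (use L_pos in simp)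
  finally show ?case
    by (simp add: a_def b_def Y_def)
qed

end

context armom begin

interpretation P: prob_space M by (rule prob)

lemma omega_core:
  fixes g g' :: "real \<Rightarrow> real" and \<gamma> s :: real
  assumes d: "\<And>t. (g has_real_derivative g' t) (at t)"
    and gm[measurable]: "g \<in> borel_measurable borel"
    and Fg: "(\<integral>\<^sup>+v. ennreal ((g v)^2 * (1+\<bar>v\<bar>) powr \<gamma>) \<partial>lborel) < \<infinity>"
    and Fg': "(\<integral>\<^sup>+v. ennreal ((g' v)^2 * (1+\<bar>v\<bar>) powr \<gamma>) \<partial>lborel) < \<infinity>"
    and ga: "0 \<le> \<gamma>" and qs: "q = s + \<gamma>" and s0: "0 < s" and s2: "s \<le> 2"
  shows "\<exists>K1. \<forall>i. (\<integral>\<^sup>+x. (\<integral>\<^sup>+u. ennreal ((g (u - \<nu> (e (int i) x)) - g (u - \<nu> (es i x)))^2 * (1+\<bar>u\<bar>) powr \<gamma>) \<partial>lborel) \<partial>M)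
            \<le> ennreal (K1 * (L powr s)^i)"
proof -
  define Fl where "Fl = enn2real (\<integral>\<^sup>+v. ennreal ((g v)^2 * (1+\<bar>v\<bar>) powr \<gamma>) \<partial>lborel)"
  define Fl1 where "Fl1 = enn2real (\<integral>\<^sup>+v. ennreal ((g' v)^2 * (1+\<bar>v\<bar>) powr \<gamma>) \<partial>lborel)"
  have Fl: "(\<integral>\<^sup>+v. ennreal ((g v)^2 * (1+\<bar>v\<bar>) powr \<gamma>) \<partial>lborel) = ennreal Fl"
    using Fg by (simp add: Fl_def less_top ennreal_enn2real)
  have Fl1: "(\<integral>\<^sup>+v. ennreal ((g' v)^2 * (1+\<bar>v\<bar>) powr \<gamma>) \<partial>lborel) = ennreal Fl1"
    using Fg' by (simp add: Fl1_def less_top ennreal_enn2real)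
  have Fl0: "0 \<le> Fl" "0 \<le> Fl1" by (simp_all add: Fl_def Fl1_def)
  define CF where "CF = 4 * Fl + Fl1"
  have CF0: "0 \<le> CF" using Fl0 by (simp add: CF_def)
  define Mr where "Mr = enn2real Mq"
  have Mr: "Mq = ennreal Mr" using Mq_fin by (simp add: Mr_def less_top ennreal_enn2real)
  have Mr0: "0 \<le> Mr" by (simp add: Mr_def)
  have c0: "0 \<le> c" by (simp add: c_def)
  define K1 where "K1 = CF * (5 powr (q - 1) * ((1 + 2*c) powr q + 4 * Mr))"
  show ?thesis
  proof (intro exI allI)
    fix i
    have inner: "(\<integral>\<^sup>+u. ennreal ((g (u - a) - g (u - b))^2 * (1+\<bar>u\<bar>) powr \<gamma>) \<partial>lborel)
        \<le> ennreal (CF * (min 1 ((a - b)^2) * (1 + \<bar>a\<bar> + \<bar>b\<bar>) powr \<gamma>))" for a b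
    proof -
      let ?Y = "(1 + \<bar>a\<bar> + \<bar>b\<bar>) powr \<gamma>"
      have b1: "(\<integral>\<^sup>+u. ennreal ((g (u - a) - g (u - b))^2 * (1+\<bar>u\<bar>) powr \<gamma>) \<partial>lborel)
          \<le> ennreal ((2 * (1+\<bar>a\<bar>) powr \<gamma> + 2 * (1+\<bar>b\<bar>) powr \<gamma>) * Fl)"
        using bound_diff1[OF gm ga, of a b] Fl Fl0 by (simp add: ennreal_mult)
      have b2: "(\<integral>\<^sup>+u. ennreal ((g (u - a) - g (u - b))^2 * (1+\<bar>u\<bar>) powr \<gamma>) \<partial>lborel)
          \<le> ennreal ((a - b)^2 * ?Y * Fl1)"
        using bound2[OF d ga, of a b] Fl1 Fl0 by (simp add: ennreal_mult)
      show ?thesis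
      proof (cases "(a - b)^2 \<le> 1")
        case True
        have "(a - b)^2 * ?Y * Fl1 \<le> CF * (min 1 ((a - b)^2) * ?Y)"
          using True Fl0 by (simp add: CF_def algebra_simps mult_left_mono)
        then show ?thesis using b2 by (meson ennreal_leI order_trans)
      next
        case False
        have ya: "(1+\<bar>a\<bar>) powr \<gamma> \<le> ?Y" using ga by (intro powr_mono2) auto
        have yb: "(1+\<bar>b\<bar>) powr \<gamma> \<le> ?Y" using ga by (intro powr_mono2) auto
        have "(2 * (1+\<bar>a\<bar>) powr \<gamma> + 2 * (1+\<bar>b\<bar>) powr \<gamma>) * Fl \<le> (4 * ?Y) * Fl"
          using ya yb Fl0 by (intro mult_right_mono) auto
        also have "\<dots> \<le> CF * (min 1 ((a - b)^2) * ?Y)"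
          using False Fl0 by (simp add: CF_def algebra_simps)
        finally show ?thesis using b1 by (meson ennreal_leI order_trans)
      qed
    qed
    define K' where "K' = CF * (L powr s)^i * 5 powr (q - 1)"
    have K'0: "0 \<le> K'" using CF0 by (simp add: K'_def)
    have "(\<integral>\<^sup>+x. (\<integral>\<^sup>+u. ennreal ((g (u - \<nu> (e (int i) x)) - g (u - \<nu> (es i x)))^2 * (1+\<bar>u\<bar>) powr \<gamma>) \<partial>lborel) \<partial>M)
        \<le> (\<integral>\<^sup>+x. ennreal K' * (ennreal ((1 + 2*c) powr q) + ennreal (\<bar>e 0 x\<bar> powr q) + ennreal (\<bar>es 0 x\<bar> powr q) + ennreal (\<bar>e (int i) x\<bar> powr q) + ennreal (\<bar>es i x\<bar> powr q)) \<partial>M)"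
    proof (intro nn_integral_mono_AE)
      show "AE x in M. (\<integral>\<^sup>+u. ennreal ((g (u - \<nu> (e (int i) x)) - g (u - \<nu> (es i x)))^2 * (1+\<bar>u\<bar>) powr \<gamma>) \<partial>lborel)
         \<le> ennreal K' * (ennreal ((1 + 2*c) powr q) + ennreal (\<bar>e 0 x\<bar> powr q) + ennreal (\<bar>es 0 x\<bar> powr q) + ennreal (\<bar>e (int i) x\<bar> powr q) + ennreal (\<bar>es i x\<bar> powr q))"
        using ae_core[OF ga qs s0 s2, of i]
      proof eventually_elim
        case (elim x)
        have "CF * (min 1 ((\<nu> (e (int i) x) - \<nu> (es i x))^2) * (1 + \<bar>\<nu> (e (int i) x)\<bar> + \<bar>\<nu> (es i x)\<bar>) powr \<gamma>)
            \<le> CF * ((L powr s)^i * (5 powr (q - 1) * ((1 + 2*c) powr q + \<bar>e 0 x\<bar> powr q + \<bar>es 0 x\<bar> powr q + \<bar>e (int i) x\<bar> powr q + \<bar>es i x\<bar> powr q)))"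
          using elim CF0 by (intro mult_left_mono) auto
        also have "\<dots> = K' * ((1 + 2*c) powr q + \<bar>e 0 x\<bar> powr q + \<bar>es 0 x\<bar> powr q + \<bar>e (int i) x\<bar> powr q + \<bar>es i x\<bar> powr q)"
          by (simp add: K'_def mult_ac)
        finally have "ennreal (CF * (min 1 ((\<nu> (e (int i) x) - \<nu> (es i x))^2) * (1 + \<bar>\<nu> (e (int i) x)\<bar> + \<bar>\<nu> (es i x)\<bar>) powr \<gamma>))
            \<le> ennreal (K' * ((1 + 2*c) powr q + \<bar>e 0 x\<bar> powr q + \<bar>es 0 x\<bar> powr q + \<bar>e (int i) x\<bar> powr q + \<bar>es i x\<bar> powr q))"
          by (rule ennreal_leI)
        also have "\<dots> = ennreal K' * (ennreal ((1 + 2*c) powr q) + ennreal (\<bar>e 0 x\<bar> powr q) + ennreal (\<bar>es 0 x\<bar> powr q) + ennreal (\<bar>e (int i) x\<bar> powr q) + ennreal (\<bar>es i x\<bar> powr q))"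
          using K'0 by (simp add: ennreal_mult ennreal_plus)
        finally show ?case using inner[of "\<nu> (e (int i) x)" "\<nu> (es i x)"] by (meson order_trans)
      qed
    qed
    also have "\<dots> = ennreal K' * (ennreal ((1 + 2*c) powr q) + Mq + Mq + Mq + Mq)"
      by (simp add: nn_integral_cmult nn_integral_add Mq_e Mq_es P.emeasure_space_1)
    also have "\<dots> = ennreal (K1 * (L powr s)^i)"
      using K'0 Mr0 by (simp add: Mr K'_def K1_def ennreal_mult[symmetric] ennreal_plus[symmetric] mult_ac add_ac del: ennreal_plus)
    finally show "(\<integral>\<^sup>+x. (\<integral>\<^sup>+u. ennreal ((g (u - \<nu> (e (int i) x)) - g (u - \<nu> (es i x)))^2 * (1+\<bar>u\<bar>) powr \<gamma>) \<partial>lborel) \<partial>M)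
            \<le> ennreal (K1 * (L powr s)^i)" .
  qed
qed

end

lemma amgm_real:
  fixes A y k :: real assumes "0 < k"
  shows "A * y \<le> k / 2 * A^2 + y^2 / (2 * k)"
proof -
  have "k / 2 * A^2 + y^2 / (2 * k) - A * y = (k * A - y)^2 / (2 * k)"
    using assms by (simp add: field_simps power2_eq_square)
  moreover have "0 \<le> (k * A - y)^2 / (2 * k)" using assms by simp
  ultimately show ?thesis by linarith
qed

lemma amgm_L2:
  fixes V :: "'a \<Rightarrow> real"
  assumes lam: "0 < lam" and w: "0 < w" and y: "0 \<le> y"
  shows "L2norm M V * ennreal y \<le> ennreal (lam / 2) * ((\<integral>\<^sup>+x. ennreal ((V x)^2) \<partial>M) * ennreal w) + ennreal (1 / (2 * lam)) * ennreal (y^2 / w)"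
proof (cases "(\<integral>\<^sup>+x. ennreal ((V x)^2) \<partial>M) = \<infinity>")
  case True
  then show ?thesis using lam w by (simp add: ennreal_mult_top ennreal_top_mult)
next
  case False
  define r where "r = enn2real (\<integral>\<^sup>+x. ennreal ((V x)^2) \<partial>M)"
  have I: "(\<integral>\<^sup>+x. ennreal ((V x)^2) \<partial>M) = ennreal r"
    using False by (simp add: r_def less_top ennreal_enn2real)
  have r0: "0 \<le> r" by (simp add: r_def)
  have L: "L2norm M V = ennreal (sqrt r)"
    unfolding L2norm_def Let_def using False by (simp add: r_def)
  have "sqrt r * y \<le> (lam * w) / 2 * (sqrt r)^2 + y^2 / (2 * (lam * w))"
    using lam w by (intro amgm_real) auto
  also have "\<dots> = lam / 2 * (r * w) + 1 / (2 * lam) * (y^2 / w)"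
    using r0 by (simp add: field_simps)
  finally have "ennreal (sqrt r * y) \<le> ennreal (lam / 2 * (r * w) + 1 / (2 * lam) * (y^2 / w))"
    by (rule ennreal_leI)
  also have "\<dots> = ennreal (lam / 2) * (ennreal r * ennreal w) + ennreal (1 / (2 * lam)) * ennreal (y^2 / w)"
    using lam w r0 by (simp add: ennreal_mult[symmetric] ennreal_plus[symmetric] del: ennreal_plus)
  also have "ennreal (sqrt r * y) = L2norm M V * ennreal y"
    using y r0 by (simp add: L ennreal_mult)
  finally show ?thesis by (simp add: I)
qed

lemma psi_part:
  fixes \<psi> :: "real \<Rightarrow> real"
  assumes pm[measurable]: "\<psi> \<in> borel_measurable borel" and ga: "0 \<le> \<gamma>"
    and pint: "(\<integral>\<^sup>+ t. ennreal ((\<psi> t)\<^sup>2 * (1 + \<bar>t\<bar>) powr (- \<gamma>)) \<partial>lborel) < \<infinity>"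
  shows "(\<integral>\<^sup>+u. ennreal ((psibar \<psi> \<epsilon>0 u)^2 / (1 + \<bar>u\<bar>) powr \<gamma>) \<partial>lborel) < \<infinity>"
proof -
  let ?I = "\<integral>\<^sup>+ t. ennreal ((\<psi> t)\<^sup>2 * (1 + \<bar>t\<bar>) powr (- \<gamma>)) \<partial>lborel"
  have sh: "(\<integral>\<^sup>+u. ennreal ((\<psi> (u + a))^2 / (1 + \<bar>u\<bar>) powr \<gamma>) \<partial>lborel) \<le> ennreal ((1 + \<bar>a\<bar>) powr \<gamma>) * ?I" for a
  proof -
    have "(\<integral>\<^sup>+u. ennreal ((\<psi> (u + a))^2 / (1 + \<bar>u\<bar>) powr \<gamma>) \<partial>lborel)
        = (\<integral>\<^sup>+v. ennreal ((\<psi> v)^2 / (1 + \<bar>v - a\<bar>) powr \<gamma>) \<partial>lborel)"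
      using nn_translate[of "\<lambda>v. ennreal ((\<psi> v)^2 / (1 + \<bar>v - a\<bar>) powr \<gamma>)" a] by simp
    also have "\<dots> \<le> (\<integral>\<^sup>+v. ennreal ((1 + \<bar>a\<bar>) powr \<gamma>) * ennreal ((\<psi> v)\<^sup>2 * (1 + \<bar>v\<bar>) powr (- \<gamma>)) \<partial>lborel)"
    proof (intro nn_integral_mono)
      fix v
      have W: "(1 + \<bar>v\<bar>) powr \<gamma> \<le> (1 + \<bar>v - a\<bar>) powr \<gamma> * (1 + \<bar>a\<bar>) powr \<gamma>"
        using W_shift[OF ga, of "v - a" a] by simp
      have pos1: "0 < (1 + \<bar>v - a\<bar>) powr \<gamma>" "0 < (1 + \<bar>v\<bar>) powr \<gamma>" by auto
      have "1 / (1 + \<bar>v - a\<bar>) powr \<gamma> \<le> (1 + \<bar>a\<bar>) powr \<gamma> / (1 + \<bar>v\<bar>) powr \<gamma>"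
        using W pos1 by (simp add: field_simps)
      then have "(\<psi> v)^2 / (1 + \<bar>v - a\<bar>) powr \<gamma> \<le> (1 + \<bar>a\<bar>) powr \<gamma> * ((\<psi> v)\<^sup>2 * (1 + \<bar>v\<bar>) powr (- \<gamma>))"
        using mult_left_mono[of "1 / (1 + \<bar>v - a\<bar>) powr \<gamma>" "(1 + \<bar>a\<bar>) powr \<gamma> / (1 + \<bar>v\<bar>) powr \<gamma>" "(\<psi> v)^2"]
        by (simp add: powr_minus_divide field_simps)
      then show "ennreal ((\<psi> v)^2 / (1 + \<bar>v - a\<bar>) powr \<gamma>) \<le> ennreal ((1 + \<bar>a\<bar>) powr \<gamma>) * ennreal ((\<psi> v)\<^sup>2 * (1 + \<bar>v\<bar>) powr (- \<gamma>))"
        by (simp add: ennreal_mult[symmetric] ennreal_leI)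
    qed
    also have "\<dots> = ennreal ((1 + \<bar>a\<bar>) powr \<gamma>) * ?I"
      by (intro nn_integral_cmult) auto
    finally show ?thesis .
  qed
  have "(\<integral>\<^sup>+u. ennreal ((psibar \<psi> \<epsilon>0 u)^2 / (1 + \<bar>u\<bar>) powr \<gamma>) \<partial>lborel)
      \<le> (\<integral>\<^sup>+u. 2 * ennreal ((\<psi> (u + \<epsilon>0))^2 / (1 + \<bar>u\<bar>) powr \<gamma>) + 2 * ennreal ((\<psi> (u + - \<epsilon>0))^2 / (1 + \<bar>u\<bar>) powr \<gamma>) \<partial>lborel)"
  proof (intro nn_integral_mono)
    fix u
    define A where "A = \<psi> (u + \<epsilon>0)"
    define B where "B = \<psi> (u - \<epsilon>0)"
    define W where "W = (1 + \<bar>u\<bar>) powr \<gamma>"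
    have W0: "0 < W" by (simp add: W_def)
    have "0 \<le> (\<bar>A\<bar> - \<bar>B\<bar>)^2" by simp
    then have "(\<bar>A\<bar> + \<bar>B\<bar>)^2 \<le> 2 * A^2 + 2 * B^2"
      by (simp add: power2_sum power2_diff power2_abs)
    then have "(\<bar>A\<bar> + \<bar>B\<bar>)^2 / W \<le> (2 * A^2 + 2 * B^2) / W"
      using W0 by (intro divide_right_mono) auto
    also have "\<dots> = 2 * (A^2 / W) + 2 * (B^2 / W)" by (simp add: add_divide_distrib)
    finally have "ennreal ((\<bar>A\<bar> + \<bar>B\<bar>)^2 / W) \<le> ennreal (2 * (A^2 / W) + 2 * (B^2 / W))"
      by (rule ennreal_leI)
    also have "\<dots> = 2 * ennreal (A^2 / W) + 2 * ennreal (B^2 / W)"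
      using W0 by (intro ennreal_2sum) auto
    finally show "ennreal ((psibar \<psi> \<epsilon>0 u)^2 / (1 + \<bar>u\<bar>) powr \<gamma>) \<le> 2 * ennreal ((\<psi> (u + \<epsilon>0))^2 / (1 + \<bar>u\<bar>) powr \<gamma>) + 2 * ennreal ((\<psi> (u + - \<epsilon>0))^2 / (1 + \<bar>u\<bar>) powr \<gamma>)"
      by (simp add: A_def B_def W_def psibar_def)
  qed
  also have "\<dots> = 2 * (\<integral>\<^sup>+u. ennreal ((\<psi> (u + \<epsilon>0))^2 / (1 + \<bar>u\<bar>) powr \<gamma>) \<partial>lborel) + 2 * (\<integral>\<^sup>+u. ennreal ((\<psi> (u + - \<epsilon>0))^2 / (1 + \<bar>u\<bar>) powr \<gamma>) \<partial>lborel)"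
    by (simp add: nn_integral_add nn_integral_cmult)
  also have "\<dots> \<le> 2 * (ennreal ((1 + \<bar>\<epsilon>0\<bar>) powr \<gamma>) * ?I) + 2 * (ennreal ((1 + \<bar>- \<epsilon>0\<bar>) powr \<gamma>) * ?I)"
    by (intro add_mono mult_left_mono sh) auto
  also have "\<dots> < \<infinity>" using pint by (simp add: ennreal_mult_less_top)
  finally show ?thesis .
qed

context armom begin

interpretation P: prob_space M by (rule prob)
interpretation LM: pair_sigma_finite lborel M
  by (intro pair_sigma_finite.intro lborel.sigma_finite_measure_axioms P.sigma_finite_measure_axioms)

lemma omega_bound:
  fixes g g' :: "real \<Rightarrow> real" and \<gamma> s \<epsilon>0 :: real and \<psi> :: "real \<Rightarrow> real" and l :: nat
  assumes d: "\<And>t. (g has_real_derivative g' t) (at t)"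
    and gm[measurable]: "g \<in> borel_measurable borel"
    and Fg: "(\<integral>\<^sup>+v. ennreal ((g v)^2 * (1+\<bar>v\<bar>) powr \<gamma>) \<partial>lborel) < \<infinity>"
    and Fg': "(\<integral>\<^sup>+v. ennreal ((g' v)^2 * (1+\<bar>v\<bar>) powr \<gamma>) \<partial>lborel) < \<infinity>"
    and ga: "0 \<le> \<gamma>" and qs: "q = s + \<gamma>" and s0: "0 < s" and s2: "s \<le> 2"
    and pm[measurable]: "\<psi> \<in> borel_measurable borel"
    and pint: "(\<integral>\<^sup>+ t. ennreal ((\<psi> t)\<^sup>2 * (1 + \<bar>t\<bar>) powr (- \<gamma>)) \<partial>lborel) < \<infinity>"
    and hD: "\<And>y u. (deriv ^^ l) (cond_dens f \<nu> y) u = g (u - \<nu> y)"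
  shows "\<exists>C. \<forall>i. omega_bar M f \<nu> \<psi> \<epsilon>0 (\<lambda>k. e (int k)) es l i \<le> ennreal (C * (L powr (s/2))^i)"
proof -
  obtain K1 where K1: "\<And>i. (\<integral>\<^sup>+x. (\<integral>\<^sup>+u. ennreal ((g (u - \<nu> (e (int i) x)) - g (u - \<nu> (es i x)))^2 * (1+\<bar>u\<bar>) powr \<gamma>) \<partial>lborel) \<partial>M)
            \<le> ennreal (K1 * (L powr s)^i)"
    using omega_core[OF d gm Fg Fg' ga qs s0 s2] by blast
  define K2 where "K2 = max K1 0"
  have K20: "0 \<le> K2" by (simp add: K2_def)
  let ?P = "\<integral>\<^sup>+u. ennreal ((psibar \<psi> \<epsilon>0 u)^2 / (1 + \<bar>u\<bar>) powr \<gamma>) \<partial>lborel"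
  define Pr where "Pr = enn2real ?P"
  have Pr: "?P = ennreal Pr" using psi_part[OF pm ga pint, of \<epsilon>0] by (simp add: Pr_def less_top ennreal_enn2real)
  have Pr0: "0 \<le> Pr" by (simp add: Pr_def)
  define \<kappa> where "\<kappa> = L powr (s/2)"
  have k0: "0 < \<kappa>" using L_pos by (simp add: \<kappa>_def)
  have k2: "L powr s = \<kappa>^2"
    using L_pos unfolding \<kappa>_def by (subst powr_power) auto
  show ?thesis
  proof (intro exI allI)
    fix i
    define lam where "lam = 1 / \<kappa>^i"
    have lam0: "0 < lam" using k0 by (simp add: lam_def)
    let ?V = "\<lambda>u x. g (u - \<nu> (e (int i) x)) - g (u - \<nu> (es i x))"
    have meas2[measurable]: "(\<lambda>(u, x). ennreal ((?V u x)^2 * (1+\<bar>u\<bar>) powr \<gamma>)) \<in> borel_measurable (lborel \<Otimes>\<^sub>M M)"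
      by measurable
    have meas3[measurable]: "(\<lambda>(u, x). ennreal ((?V u x)^2)) \<in> borel_measurable (lborel \<Otimes>\<^sub>M M)"
      by measurable
    have [measurable]: "(\<lambda>u. psibar \<psi> \<epsilon>0 u) \<in> borel_measurable borel"
      unfolding psibar_def by measurable
    have measE[measurable]: "(\<lambda>u. \<integral>\<^sup>+x. ennreal ((?V u x)^2) \<partial>M) \<in> borel_measurable lborel"
      using P.borel_measurable_nn_integral[OF meas3] by simp
    have "omega_bar M f \<nu> \<psi> \<epsilon>0 (\<lambda>k. e (int k)) es l i = (\<integral>\<^sup>+u. L2norm M (?V u) * ennreal (psibar \<psi> \<epsilon>0 u) \<partial>lborel)"
      unfolding omega_bar_def by (simp add: hD)
    also have "\<dots> \<le> (\<integral>\<^sup>+u. ennreal (lam / 2) * ((\<integral>\<^sup>+x. ennreal ((?V u x)^2) \<partial>M) * ennreal ((1+\<bar>u\<bar>) powr \<gamma>))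
                  + ennreal (1 / (2 * lam)) * ennreal ((psibar \<psi> \<epsilon>0 u)^2 / (1+\<bar>u\<bar>) powr \<gamma>) \<partial>lborel)"
      by (intro nn_integral_mono amgm_L2 lam0) (auto simp: psibar_def)
    also have "\<dots> = ennreal (lam / 2) * (\<integral>\<^sup>+u. (\<integral>\<^sup>+x. ennreal ((?V u x)^2) \<partial>M) * ennreal ((1+\<bar>u\<bar>) powr \<gamma>) \<partial>lborel)
                  + ennreal (1 / (2 * lam)) * ?P"
      by (subst nn_integral_add) (auto simp: nn_integral_cmult)
    also have "(\<integral>\<^sup>+u. (\<integral>\<^sup>+x. ennreal ((?V u x)^2) \<partial>M) * ennreal ((1+\<bar>u\<bar>) powr \<gamma>) \<partial>lborel)
        = (\<integral>\<^sup>+u. (\<integral>\<^sup>+x. ennreal ((?V u x)^2 * (1+\<bar>u\<bar>) powr \<gamma>) \<partial>M) \<partial>lborel)"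
      by (intro nn_integral_cong) (auto simp: nn_integral_multc[symmetric] ennreal_mult)
    also have "\<dots> = (\<integral>\<^sup>+x. (\<integral>\<^sup>+u. ennreal ((?V u x)^2 * (1+\<bar>u\<bar>) powr \<gamma>) \<partial>lborel) \<partial>M)"
      using meas2 by (rule LM.Fubini'[symmetric])
    also have "\<dots> \<le> ennreal (K2 * (\<kappa>^2)^i)"
    proof -
      have "ennreal (K1 * (L powr s)^i) \<le> ennreal (K2 * (\<kappa>^2)^i)"
        unfolding k2 K2_def by (intro ennreal_leI mult_right_mono) auto
      then show ?thesis using K1[of i] by (rule order_trans[rotated])
    qed
    finally have "omega_bar M f \<nu> \<psi> \<epsilon>0 (\<lambda>k. e (int k)) es l i
        \<le> ennreal (lam / 2) * ennreal (K2 * (\<kappa>^2)^i) + ennreal (1 / (2 * lam)) * ennreal Pr"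
      by (simp add: Pr add_mono mult_left_mono)
    also have "\<dots> = ennreal (lam / 2 * (K2 * (\<kappa>^2)^i) + 1 / (2 * lam) * Pr)"
      using lam0 K20 Pr0 by (simp add: ennreal_mult[symmetric] ennreal_plus[symmetric] del: ennreal_plus)
    also have "lam / 2 * (K2 * (\<kappa>^2)^i) + 1 / (2 * lam) * Pr = (K2 + Pr) / 2 * \<kappa>^i"
      using k0 by (simp add: lam_def field_simps power_mult[symmetric] power2_eq_square power_mult_distrib)
    finally show "omega_bar M f \<nu> \<psi> \<epsilon>0 (\<lambda>k. e (int k)) es l i \<le> ennreal ((K2 + Pr) / 2 * (L powr (s/2))^i)"
      by (simp add: \<kappa>_def)
  qed
qed

end

lemma deriv_shift_pow:
  fixes h :: "real \<Rightarrow> real"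
  assumes d: "\<And>k v. k \<le> p \<Longrightarrow> ((deriv ^^ k) h has_real_derivative (deriv ^^ Suc k) h v) (at v)"
  shows "l \<le> Suc p \<Longrightarrow> (deriv ^^ l) (\<lambda>u. h (u - c)) = (\<lambda>u. (deriv ^^ l) h (u - c))"
proof (induction l)
  case 0 then show ?case by simp
next
  case (Suc l)
  then have lp: "l \<le> p" by simp
  have "(deriv ^^ Suc l) (\<lambda>u. h (u - c)) = deriv ((deriv ^^ l) (\<lambda>u. h (u - c)))" by simp
  also have "\<dots> = deriv (\<lambda>u. (deriv ^^ l) h (u - c))" using Suc by simp
  also have "\<dots> = (\<lambda>u. (deriv ^^ Suc l) h (u - c))"
  proof
    fix u
    have "((\<lambda>u. (deriv ^^ l) h (u - c)) has_real_derivative (deriv ^^ Suc l) h (u - c) * 1) (at u)"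
      by (rule DERIV_chain2[OF d[OF lp]]) (auto intro!: derivative_eq_intros)
    then show "deriv (\<lambda>u. (deriv ^^ l) h (u - c)) u = (deriv ^^ Suc l) h (u - c)"
      by (simp add: DERIV_imp_deriv)
  qed
  finally show ?case .
qed

theorem proposition6:
  fixes M :: "'a measure"
    and \<epsilon> \<epsilon>' :: "int \<Rightarrow> 'a \<Rightarrow> real"
    and f\<^sub>\<epsilon> :: "real \<Rightarrow> real"
    and \<nu> :: "real \<Rightarrow> real"
    and G :: "(nat \<Rightarrow> real) \<Rightarrow> real"
    and e :: "int \<Rightarrow> 'a \<Rightarrow> real"
    and \<rho> \<psi> :: "real \<Rightarrow> real"
    and \<epsilon>0 \<gamma> q L :: real
    and p :: nat
  assumes prob: "prob_space M"
    and indep: "prob_space.indep_vars M (\<lambda>_. borel)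
                  (\<lambda>k. case k of Inl i \<Rightarrow> \<epsilon> i | Inr i \<Rightarrow> \<epsilon>' i) UNIV"
    and dens: "\<And>i. distributed M lborel (\<epsilon> i) (\<lambda>v. ennreal (f\<^sub>\<epsilon> v))"
    and dens': "\<And>i. distributed M lborel (\<epsilon>' i) (\<lambda>v. ennreal (f\<^sub>\<epsilon> v))"
    and lip: "L-lipschitz_on UNIV \<nu>" and L_lt1: "L < 1"
    and G_meas: "G \<in> borel_measurable (PiM UNIV (\<lambda>_::nat. borel))"
    and e_G: "\<And>i x. e i x = G (\<lambda>j. \<epsilon> (i - int j) x)"
    and e_rec: "\<And>i. AE x in M. e i x = \<nu> (e (i - 1) x) + \<epsilon> i x"
    and rho_convex: "convex_on UNIV \<rho>"
    and psi_mono: "mono \<psi>"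
    and psi_deriv: "\<And>x y. \<rho> y \<ge> \<rho> x + \<psi> x * (y - x)"
    and eps0_pos: "\<epsilon>0 > 0"
    and gamma: "\<gamma> > 1"
    and psi_int: "(\<integral>\<^sup>+ t. ennreal ((\<psi> t)\<^sup>2 * (1 + \<bar>t\<bar>) powr (- \<gamma>)) \<partial>lborel) < \<infinity>"
    and q_range: "\<gamma> < q" "q < \<gamma> + 2"
    and eps_Lq: "\<And>i. (\<integral>\<^sup>+ x. ennreal (\<bar>\<epsilon> i x\<bar> powr q) \<partial>M) < \<infinity>"
    and f_diff: "\<And>k v. k \<le> p \<Longrightarrow>
                   ((deriv ^^ k) f\<^sub>\<epsilon> has_real_derivative (deriv ^^ Suc k) f\<^sub>\<epsilon> v) (at v)"
    and f_int: "(\<Sum>k\<le>p + 1. \<integral>\<^sup>+ v. ennreal (((deriv ^^ k) f\<^sub>\<epsilon> v)\<^sup>2 * (1 + \<bar>v\<bar>) powr \<gamma>) \<partial>lborel) < \<infinity>"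
  shows "\<exists>\<kappa>. 0 < \<kappa> \<and> \<kappa> < 1 \<and>
           (\<forall>l\<le>p. \<exists>C. \<forall>\<^sub>F i in sequentially.
              omega_bar M f\<^sub>\<epsilon> \<nu> \<psi> \<epsilon>0
                (\<lambda>k. e (int k))
                (\<lambda>k x. G (\<lambda>j. if j = k then \<epsilon>' 0 x else \<epsilon> (int k - int j) x))
                l i \<le> ennreal (C * \<kappa> ^ i))"
proof -
  define L' where "L' = max L (1/2)"
  have L0: "0 \<le> L" using lip by (rule lipschitz_on_nonneg)
  have L'0: "0 < L'" "L' < 1" using L_lt1 by (auto simp: L'_def)
  have lipL': "\<bar>\<nu> a - \<nu> b\<bar> \<le> L' * \<bar>a - b\<bar>" for a b
  proof -
    have "\<bar>\<nu> a - \<nu> b\<bar> \<le> L * \<bar>a - b\<bar>" using lipschitz_onD[OF lip, of a b] by (simp add: dist_real_def)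
    also have "\<dots> \<le> L' * \<bar>a - b\<bar>" by (intro mult_right_mono) (auto simp: L'_def)
    finally show ?thesis .
  qed
  have nu_cont: "continuous_on UNIV \<nu>" using lip by (rule lipschitz_on_continuous_on)
  have nu_meas: "\<nu> \<in> borel_measurable borel" using nu_cont by (rule borel_measurable_continuous_onI)
  have q1: "1 \<le> q" using gamma q_range by simp
  interpret A: armom M \<epsilon> \<epsilon>' f\<^sub>\<epsilon> \<nu> G e L' q
  proof (rule armom.intro)
    show "arsetup M \<epsilon> \<epsilon>' f\<^sub>\<epsilon> \<nu> G e L'"
      by (rule arsetup.intro[OF prob indep dens dens' lipL' nu_meas L'0(1) L'0(2) G_meas e_G e_rec])
    show "armom_axioms M \<epsilon> q"
      by (rule armom_axioms.intro[OF q1 eps_Lq])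
  qed
  define s where "s = q - \<gamma>"
  have s0: "0 < s" and s2: "s \<le> 2" and qs: "q = s + \<gamma>" and ga: "0 \<le> \<gamma>"
    using q_range gamma by (auto simp: s_def)
  define \<kappa> where "\<kappa> = L' powr (s/2)"
  have k0: "0 < \<kappa>" using L'0 by (simp add: \<kappa>_def)
  have k1: "\<kappa> < 1"
  proof -
    have "L' powr (s/2) < 1 powr (s/2)" using L'0 s0 by (intro powr_less_mono2) auto
    then show ?thesis by (simp add: \<kappa>_def)
  qed
  have estar: "(\<lambda>k x. G (\<lambda>j. if j = k then \<epsilon>' 0 x else \<epsilon> (int k - int j) x)) = A.es"
    by (intro ext) (simp add: A.es_alt)
  have pm: "\<psi> \<in> borel_measurable borel" using psi_mono by (rule borel_measurable_mono)
  let ?F = "\<lambda>k. \<integral>\<^sup>+ v. ennreal (((deriv ^^ k) f\<^sub>\<epsilon> v)\<^sup>2 * (1 + \<bar>v\<bar>) powr \<gamma>) \<partial>lborel"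
  have Fk: "?F k < \<infinity>" if "k \<le> p + 1" for k
  proof -
    have "?F k \<le> (\<Sum>k\<le>p + 1. ?F k)" using that by (intro member_le_sum) auto
    then show ?thesis using f_int by (rule le_less_trans)
  qed
  show ?thesis
  proof (rule exI[of _ \<kappa>], intro conjI allI impI)
    show "0 < \<kappa>" by (fact k0)
    show "\<kappa> < 1" by (fact k1)
    fix l assume lp: "l \<le> p"
    have d: "\<And>t. ((deriv ^^ l) f\<^sub>\<epsilon> has_real_derivative (deriv ^^ Suc l) f\<^sub>\<epsilon> t) (at t)"
      using f_diff lp by blast
    have gm: "(deriv ^^ l) f\<^sub>\<epsilon> \<in> borel_measurable borel"
      by (rule borel_measurable_continuous_onI, rule has_real_derivative_imp_continuous_on[where f'="(deriv ^^ Suc l) f\<^sub>\<epsilon>"], rule d)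
    have hD: "(deriv ^^ l) (cond_dens f\<^sub>\<epsilon> \<nu> y) u = (deriv ^^ l) f\<^sub>\<epsilon> (u - \<nu> y)" for y u
    proof -
      have "cond_dens f\<^sub>\<epsilon> \<nu> y = (\<lambda>u. f\<^sub>\<epsilon> (u - \<nu> y))" by (simp add: cond_dens_def[abs_def])
      then show ?thesis using deriv_shift_pow[of p f\<^sub>\<epsilon> l "\<nu> y", OF f_diff] lp by simp
    qed
    obtain C where C: "\<And>i. omega_bar M f\<^sub>\<epsilon> \<nu> \<psi> \<epsilon>0 (\<lambda>k. e (int k)) A.es l i \<le> ennreal (C * (L' powr (s/2))^i)"
    proof -
      have "Suc l \<le> p + 1" "l \<le> p + 1" using lp by auto
      then show ?thesis using A.omega_bound[OF d gm Fk[of l] Fk[of "Suc l"] ga qs s0 s2 pm psi_int hD] that by blast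
    qed
    show "\<exists>C. \<forall>\<^sub>F i in sequentially.
              omega_bar M f\<^sub>\<epsilon> \<nu> \<psi> \<epsilon>0 (\<lambda>k. e (int k))
                (\<lambda>k x. G (\<lambda>j. if j = k then \<epsilon>' 0 x else \<epsilon> (int k - int j) x)) l i \<le> ennreal (C * \<kappa> ^ i)"
      using C unfolding estar \<kappa>_def by (intro exI always_eventually) auto
  qed
qed

end
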